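(* Let $F(X)=c_0+\cdots+c_{d-1}X^{d-1}+X^d\in\mathbb{Z}[X]$ be monic irreducible with fixed root $\xi$, $L=\mathbb{Q}(\xi)$ Galois of degree $d$ over $\mathbb{Q}$ with group $G$. Let $\mathbf{a}=(a_i)_{i\ge0}$ be a sequence of rational numbers with $a_{n+d}=-\sum_{k=0}^{d-1}c_ka_{n+k}$ for all $n\ge0$, and let $K$ be a conjugacy class of $G$ with characteristic function $\phi_K:G\to\mathbb{Q}$. Suppose $\Phi(\Psi(\mathbf{a}))=\phi_K$, where $\Psi(\mathbf{a})=\sum_{\sigma\in G}z_\sigma\otimes\sigma^{-1}\xi$ with $[z_\sigma]_{\sigma\in G}=P^{-1}[a_0,\dots,a_{d-1}]^t$, $P=[\sigma^{-1}(\xi^{i-1})]_{1\le i\le d,\sigma\in G}$, and $\Phi(\gamma\otimes\alpha)(\tau)=\gamma\cdot\tau(\alpha)$. Then for all but finitely many primes $p$, $a_p$ is $p$-integral and $a_p\equiv\phi_K(\mathrm{Frob}_p)\pmod p$.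
   Context: Matrices indexed by $G$ use a fixed total order on $G$. For a prime $p$ unramified in $L$, $\mathrm{Frob}_p$ is the conjugacy class of Frobenius automorphisms of primes above $p$, and $\phi_K(\mathrm{Frob}_p)$ is $1$ if this class is $K$ and $0$ otherwise. *)

theory Defs
  imports Complex_Main "HOL-Computational_Algebra.Computational_Algebra"
begin

definition QL :: "complex \<Rightarrow> complex set" where
  "QL \<xi> = {poly (map_poly of_rat q) \<xi> | q :: rat poly. True}"

text \<open>Gal(L/Q) = field automorphisms of L, extended by the identity outside L
  (so that they are determined as functions complex => complex).\<close>
definition Aut_L :: "complex \<Rightarrow> (complex \<Rightarrow> complex) set" where
  "Aut_L \<xi> = {\<sigma>. bij_betw \<sigma> (QL \<xi>) (QL \<xi>) \<and>
      (\<forall>x\<in>QL \<xi>. \<forall>y\<in>QL \<xi>. \<sigma> (x + y) = \<sigma> x + \<sigma> y \<and> \<sigma> (x * y) = \<sigma> x * \<sigma> y) \<and>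
      \<sigma> 1 = 1 \<and> (\<forall>x. x \<notin> QL \<xi> \<longrightarrow> \<sigma> x = x)}"

definition conj_class :: "(complex \<Rightarrow> complex) set \<Rightarrow> (complex \<Rightarrow> complex) set \<Rightarrow> bool" where
  "conj_class G K \<longleftrightarrow> (\<exists>g\<in>G. K = {h \<circ> g \<circ> inv h | h. h \<in> G})"

definition alg_int :: "complex \<Rightarrow> bool" where
  "alg_int x \<longleftrightarrow> (\<exists>q :: int poly. lead_coeff q = 1 \<and> poly (map_poly of_int q) x = 0)"

definition OL :: "complex \<Rightarrow> complex set" where
  "OL \<xi> = {x \<in> QL \<xi>. alg_int x}"

definition is_ideal_OL :: "complex \<Rightarrow> complex set \<Rightarrow> bool" where
  "is_ideal_OL \<xi> I \<longleftrightarrow> I \<subseteq> OL \<xi> \<and> 0 \<in> I \<and> (\<forall>x\<in>I. \<forall>y\<in>I. x + y \<in> I) \<and>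
     (\<forall>x\<in>I. - x \<in> I) \<and> (\<forall>r\<in>OL \<xi>. \<forall>x\<in>I. r * x \<in> I)"

definition prime_ideal_OL :: "complex \<Rightarrow> complex set \<Rightarrow> bool" where
  "prime_ideal_OL \<xi> P \<longleftrightarrow> is_ideal_OL \<xi> P \<and> P \<noteq> OL \<xi> \<and> P \<noteq> {0} \<and>
     (\<forall>x\<in>OL \<xi>. \<forall>y\<in>OL \<xi>. x * y \<in> P \<longrightarrow> x \<in> P \<or> y \<in> P)"

definition ideal_prod_OL :: "complex set \<Rightarrow> complex set \<Rightarrow> complex set" where
  "ideal_prod_OL I J = {(\<Sum>i<n. f i * g i) | (n::nat) f g. \<forall>i<n. f i \<in> I \<and> g i \<in> J}"

text \<open>p is unramified in L: no prime P above p has e(P|p) >= 2, i.e. pO_L is not in P^2.\<close>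
definition unramified :: "complex \<Rightarrow> nat \<Rightarrow> bool" where
  "unramified \<xi> p \<longleftrightarrow> (\<forall>P. prime_ideal_OL \<xi> P \<and> of_nat p \<in> P \<longrightarrow> of_nat p \<notin> ideal_prod_OL P P)"

text \<open>Frob_p: the set of Frobenius automorphisms of the primes P above p.\<close>
definition frob_class :: "complex \<Rightarrow> nat \<Rightarrow> (complex \<Rightarrow> complex) set" where
  "frob_class \<xi> p = {\<sigma> \<in> Aut_L \<xi>. \<exists>P. prime_ideal_OL \<xi> P \<and> of_nat p \<in> P \<and>
       (\<forall>x\<in>OL \<xi>. \<sigma> x - x ^ p \<in> P)}"

definition p_integral :: "nat \<Rightarrow> rat \<Rightarrow> bool" where
  "p_integral p r \<longleftrightarrow> \<not> int p dvd snd (quotient_of r)"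

definition rat_cong_mod :: "nat \<Rightarrow> rat \<Rightarrow> rat \<Rightarrow> bool" where
  "rat_cong_mod p r s \<longleftrightarrow> p_integral p (r - s) \<and> int p dvd fst (quotient_of (r - s))"

end

theory Submission
  imports Defs "Jordan_Normal_Form.Determinant" "Jordan_Normal_Form.Char_Poly"
    "HOL-Computational_Algebra.Field_as_Ring"
begin

unbundle no m_inv_syntax

definition zspan :: "(nat \<Rightarrow> complex) \<Rightarrow> nat \<Rightarrow> complex set" where
  "zspan w N = {\<Sum>k<N. of_int (c k) * w k | c. True}"

lemma zspan_0: "0 \<in> zspan w N"
  unfolding zspan_def by (rule CollectI, rule exI[of _ "\<lambda>_. 0"]) simp

lemma zspan_add: "a \<in> zspan w N \<Longrightarrow> b \<in> zspan w N \<Longrightarrow> a + b \<in> zspan w N"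
  unfolding zspan_def
proof (clarify)
  fix c c' show "\<exists>c''. (\<Sum>k<N. of_int (c k) * w k) + (\<Sum>k<N. of_int (c' k) * w k) = (\<Sum>k<N. of_int (c'' k) * w k) \<and> True"
    by (rule exI[of _ "\<lambda>k. c k + c' k"]) (simp add: sum.distrib distrib_right)
qed

lemma zspan_smult: "a \<in> zspan w N \<Longrightarrow> of_int e * a \<in> zspan w N"
  unfolding zspan_def
proof (clarify)
  fix c show "\<exists>c''. of_int e * (\<Sum>k<N. of_int (c k) * w k) = (\<Sum>k<N. of_int (c'' k) * w k) \<and> True"
    by (rule exI[of _ "\<lambda>k. e * c k"]) (simp add: sum_distrib_left mult.assoc)
qed

lemma zspan_sum: "finite A \<Longrightarrow> (\<And>i. i \<in> A \<Longrightarrow> f i \<in> zspan w N) \<Longrightarrow> sum f A \<in> zspan w N"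
  by (induction A rule: finite_induct) (auto intro: zspan_0 zspan_add)

lemma zspan_w: "k < N \<Longrightarrow> w k \<in> zspan w N"
  unfolding zspan_def
proof (rule CollectI, rule exI[of _ "\<lambda>l. if l = k then 1 else 0"], goal_cases)
  case 1
  have "(\<Sum>l<N. of_int (if l = k then 1 else 0) * w l) = (\<Sum>l<N. if l = k then w l else 0)"
    by (rule sum.cong) auto
  also have "\<dots> = w k" using 1 by simp
  finally show ?case by simp
qed

lemma zspan_mult_closed:
  assumes "\<forall>k<N. t * w k \<in> zspan w N" and "z \<in> zspan w N"
  shows "t * z \<in> zspan w N"
proof -
  from assms(2) obtain c where z: "z = (\<Sum>k<N. of_int (c k) * w k)" unfolding zspan_def by auto
  have "t * z = (\<Sum>k<N. of_int (c k) * (t * w k))" unfolding z sum_distrib_left by (simp add: algebra_simps)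
  also have "\<dots> \<in> zspan w N" by (rule zspan_sum) (use assms(1) in \<open>auto intro: zspan_smult\<close>)
  finally show ?thesis .
qed

lemma eig_alg_int:
  assumes cl: "\<forall>k<N. t * w k \<in> zspan w N" and nz: "k0 < N" "w k0 \<noteq> 0"
  shows "alg_int t"
proof -
  have "\<forall>k. \<exists>c. k < N \<longrightarrow> t * w k = (\<Sum>l<N. of_int (c l) * w l)"
    using cl unfolding zspan_def by blast
  then obtain c where c: "\<And>k. k < N \<Longrightarrow> t * w k = (\<Sum>l<N. of_int (c k l) * w l)" by metis
  define A :: "int mat" where "A = mat N N (\<lambda>(k,l). c k l)"
  define v :: "complex vec" where "v = vec N w"
  have A: "A \<in> carrier_mat N N" unfolding A_def by simp
  have Ac: "of_int_hom.mat_hom A \<in> carrier_mat N N" using A by simp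
  have "of_int_hom.mat_hom A *\<^sub>v v = t \<cdot>\<^sub>v v"
  proof (rule eq_vecI)
    fix i assume i: "i < dim_vec (t \<cdot>\<^sub>v v)"
    hence i': "i < N" unfolding v_def by simp
    have "(of_int_hom.mat_hom A *\<^sub>v v) $ i = (\<Sum>l<N. of_int (c i l) * w l)"
      using i' unfolding A_def v_def mult_mat_vec_def scalar_prod_def
      by (auto intro!: sum.cong simp: lessThan_atLeast0)
    also have "\<dots> = t * w i" using c[OF i'] by simp
    finally show "(of_int_hom.mat_hom A *\<^sub>v v) $ i = (t \<cdot>\<^sub>v v) $ i" using i' unfolding v_def by simp
  qed (simp add: v_def A_def)
  moreover have "v \<noteq> 0\<^sub>v N"
  proof
    assume "v = 0\<^sub>v N" hence "v $ k0 = 0" using nz by simp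
    thus False using nz unfolding v_def by simp
  qed
  ultimately have "eigenvector (of_int_hom.mat_hom A) v t"
    unfolding eigenvector_def v_def using A by simp
  hence "eigenvalue (of_int_hom.mat_hom A) t" unfolding eigenvalue_def by blast
  hence "poly (char_poly (of_int_hom.mat_hom A)) t = 0" by (rule eigenvalue_root_char_poly[OF Ac, THEN iffD1])
  hence "poly (of_int_poly (char_poly A)) t = 0" using of_int_hom.char_poly_hom[OF A] by metis
  moreover have "lead_coeff (char_poly A) = 1" using degree_monic_char_poly[OF A] by simp
  ultimately show ?thesis unfolding alg_int_def by blast
qed

lemma monic_root_power:
  fixes f :: "int poly" and x :: complex
  assumes "lead_coeff f = 1" "poly (of_int_poly f) x = 0"
  shows "x ^ degree f = - (\<Sum>i<degree f. of_int (coeff f i) * x ^ i)"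
proof -
  have "0 = poly (of_int_poly f) x" using assms by simp
  also have "\<dots> = (\<Sum>i\<le>degree f. of_int (coeff f i) * x ^ i)"
    by (simp add: poly_altdef degree_map_poly)
  also have "\<dots> = (\<Sum>i<degree f. of_int (coeff f i) * x ^ i) + x ^ degree f"
    using assms(1) by (simp add: lessThan_Suc_atMost[symmetric])
  finally show ?thesis by (simp add: eq_neg_iff_add_eq_0 add.commute)
qed

lemma alg_int_degree_pos:
  assumes "lead_coeff f = 1" "poly (of_int_poly f :: complex poly) x = 0"
  shows "degree f > 0"
proof (rule ccontr)
  assume "\<not> degree f > 0"
  hence d: "degree f = 0" by simp
  hence "f = [:1:]" using assms(1) degree_0_id[OF d] by simp
  thus False using assms(2) by simp
qed

lemma alg_int_closed:
  assumes x: "alg_int x" and y: "alg_int y"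
  shows "alg_int (x + y)" "alg_int (x * y)"
proof -
  from x obtain f where f: "lead_coeff f = 1" "poly (of_int_poly f) x = 0" unfolding alg_int_def by auto
  from y obtain g where g: "lead_coeff g = 1" "poly (of_int_poly g) y = 0" unfolding alg_int_def by auto
  define m where "m = degree f"
  define n where "n = degree g"
  have m: "m > 0" unfolding m_def using alg_int_degree_pos f by blast
  have n: "n > 0" unfolding n_def using alg_int_degree_pos g by blast
  define w where "w = (\<lambda>k. x ^ (k div n) * y ^ (k mod n))"
  define N where "N = m * n"
  have wij: "w (i * n + j) = x ^ i * y ^ j" if "j < n" for i j
    unfolding w_def using that n by simp
  have idx: "i * n + j < N" if "i < m" "j < n" for i j
  proof -
    have "i * n + j < i * n + n" using that by simp
    also have "\<dots> = Suc i * n" by simp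
    also have "\<dots> \<le> m * n" using that by (intro mult_right_mono) auto
    finally show ?thesis unfolding N_def .
  qed
  have mem: "x ^ i * y ^ j \<in> zspan w N" if "i < m" "j < n" for i j
    using zspan_w[OF idx[OF that], of w] wij[OF that(2)] by simp
  have xcl: "\<forall>k<N. x * w k \<in> zspan w N"
  proof (intro allI impI)
    fix k assume k: "k < N"
    define i where "i = k div n" define j where "j = k mod n"
    have j: "j < n" unfolding j_def using n by simp
    have i: "i < m" unfolding i_def N_def using k N_def by (simp add: less_mult_imp_div_less)
    have eq: "x * w k = x ^ (Suc i) * y ^ j" unfolding w_def i_def j_def by simp
    show "x * w k \<in> zspan w N"
    proof (cases "Suc i < m")
      case True thus ?thesis unfolding eq using mem[OF True j] by simp
    next
      case False hence "Suc i = m" using i by simp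
      hence "x * w k = - (\<Sum>i'<m. of_int (coeff f i') * x ^ i') * y ^ j"
        using eq monic_root_power[OF f] unfolding m_def by simp
      also have "\<dots> = (\<Sum>i'<m. of_int (- coeff f i') * (x ^ i' * y ^ j))"
        by (simp add: sum_distrib_right sum_distrib_left sum_negf[symmetric] algebra_simps)
      also have "\<dots> \<in> zspan w N"
      proof (rule zspan_sum)
        fix i' assume "i' \<in> {..<m}"
        thus "of_int (- coeff f i') * (x ^ i' * y ^ j) \<in> zspan w N" using zspan_smult mem j by blast
      qed simp
      finally show ?thesis .
    qed
  qed
  have ycl: "\<forall>k<N. y * w k \<in> zspan w N"
  proof (intro allI impI)
    fix k assume k: "k < N"
    define i where "i = k div n" define j where "j = k mod n"
    have j: "j < n" unfolding j_def using n by simp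
    have i: "i < m" unfolding i_def N_def using k N_def by (simp add: less_mult_imp_div_less)
    have eq: "y * w k = x ^ i * y ^ (Suc j)" unfolding w_def i_def j_def by (simp add: algebra_simps)
    show "y * w k \<in> zspan w N"
    proof (cases "Suc j < n")
      case True thus ?thesis unfolding eq using mem[OF i True] by simp
    next
      case False hence "Suc j = n" using j by simp
      hence "y * w k = x ^ i * - (\<Sum>j'<n. of_int (coeff g j') * y ^ j')"
        using eq monic_root_power[OF g] unfolding n_def by simp
      also have "\<dots> = (\<Sum>j'<n. of_int (- coeff g j') * (x ^ i * y ^ j'))"
        by (simp add: sum_distrib_left sum_negf[symmetric] algebra_simps)
      also have "\<dots> \<in> zspan w N"
      proof (rule zspan_sum)
        fix j' assume "j' \<in> {..<n}"
        thus "of_int (- coeff g j') * (x ^ i * y ^ j') \<in> zspan w N" using zspan_smult mem i by blast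
      qed simp
      finally show ?thesis .
    qed
  qed
  have N0: "0 < N" "w 0 \<noteq> 0" unfolding N_def w_def using m n by auto
  show "alg_int (x + y)"
  proof (rule eig_alg_int[of N _ w 0, OF _ N0])
    show "\<forall>k<N. (x + y) * w k \<in> zspan w N"
      using xcl ycl by (auto simp: distrib_right intro: zspan_add)
  qed
  show "alg_int (x * y)"
  proof (rule eig_alg_int[of N _ w 0, OF _ N0])
    show "\<forall>k<N. (x * y) * w k \<in> zspan w N"
      using ycl by (auto simp: mult.assoc intro!: zspan_mult_closed[OF xcl])
  qed
qed

lemma alg_int_of_int: "alg_int (of_int c)"
  unfolding alg_int_def by (rule exI[of _ "[:-c, 1:]"]) simp

lemma alg_int_minus: "alg_int x \<Longrightarrow> alg_int (- x)"
  using alg_int_closed(2)[OF alg_int_of_int[of "-1"]] by simp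

lemma alg_int_diff: "alg_int x \<Longrightarrow> alg_int y \<Longrightarrow> alg_int (x - y)"
  using alg_int_closed(1)[of x "-y"] alg_int_minus by simp

lemma alg_int_power: "alg_int x \<Longrightarrow> alg_int (x ^ n)"
  by (induction n) (auto intro: alg_int_closed simp: alg_int_of_int[of 1, simplified])

lemma alg_int_sum: "(\<And>i. i \<in> A \<Longrightarrow> alg_int (f i)) \<Longrightarrow> alg_int (sum f A)"
  by (induction A rule: infinite_finite_induct) (auto intro: alg_int_closed simp: alg_int_of_int[of 0, simplified])

lemma alg_int_prod: "(\<And>i. i \<in> A \<Longrightarrow> alg_int (f i)) \<Longrightarrow> alg_int (prod f A)"
  by (induction A rule: infinite_finite_induct) (auto intro: alg_int_closed simp: alg_int_of_int[of 1, simplified])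

lemma alg_int_poly: "alg_int x \<Longrightarrow> alg_int (poly (of_int_poly u) x)"
proof (induction u)
  case 0 then show ?case using alg_int_of_int[of 0] by simp
next
  case (pCons a u) then show ?case
    by (auto intro!: alg_int_closed alg_int_of_int)
qed

abbreviation rp :: "rat poly \<Rightarrow> complex poly" where "rp \<equiv> map_poly of_rat"

lemma rp_add: "rp (p + q) = rp p + rp q" by (simp add: hom_distribs)
lemma rp_mult: "rp (p * q) = rp p * rp q"
  by (induction p) (simp_all add: hom_distribs)
lemma rp_of_int: "rp (of_int_poly p) = of_int_poly p" by (simp add: map_poly_map_poly o_def)

section \<open>The field QL\<close>

lemma QL_rp: "poly (rp q) \<xi> \<in> QL \<xi>" unfolding QL_def by blast

lemma QL_cases: "x \<in> QL \<xi> \<Longrightarrow> (\<And>q. x = poly (rp q) \<xi> \<Longrightarrow> P) \<Longrightarrow> P"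
  unfolding QL_def by blast

lemma QL_add: "x \<in> QL \<xi> \<Longrightarrow> y \<in> QL \<xi> \<Longrightarrow> x + y \<in> QL \<xi>"
proof (elim QL_cases)
  fix p q assume "x = poly (rp p) \<xi>" "y = poly (rp q) \<xi>"
  thus "x + y \<in> QL \<xi>" using QL_rp[of "p + q" \<xi>] by (simp add: rp_add)
qed

lemma QL_mult: "x \<in> QL \<xi> \<Longrightarrow> y \<in> QL \<xi> \<Longrightarrow> x * y \<in> QL \<xi>"
proof (elim QL_cases)
  fix p q assume "x = poly (rp p) \<xi>" "y = poly (rp q) \<xi>"
  thus "x * y \<in> QL \<xi>" using QL_rp[of "p * q" \<xi>] by (simp add: rp_mult)
qed

lemma QL_of_rat: "of_rat r \<in> QL \<xi>"
  using QL_rp[of "[:r:]" \<xi>] by (simp add: hom_distribs)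

lemma QL_of_int: "of_int r \<in> QL \<xi>"
  using QL_of_rat[of "of_int r" \<xi>] by simp

lemma QL_0: "0 \<in> QL \<xi>"
  using QL_of_int[of 0 \<xi>] by simp
lemma QL_1: "1 \<in> QL \<xi>"
  using QL_of_int[of 1 \<xi>] by simp
lemma QL_of_nat: "of_nat n \<in> QL \<xi>"
  using QL_of_int[of "int n" \<xi>] by simp

lemma QL_xi: "\<xi> \<in> QL \<xi>"
  using QL_rp[of "[:0,1:]" \<xi>] by simp

lemma QL_minus: "x \<in> QL \<xi> \<Longrightarrow> - x \<in> QL \<xi>"
  using QL_mult[OF QL_of_int[of "-1"]] by simp

lemma QL_diff: "x \<in> QL \<xi> \<Longrightarrow> y \<in> QL \<xi> \<Longrightarrow> x - y \<in> QL \<xi>"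
  using QL_add[OF _ QL_minus] by simp

lemma QL_power: "x \<in> QL \<xi> \<Longrightarrow> x ^ n \<in> QL \<xi>"
  by (induction n) (auto intro: QL_mult QL_1)

lemma QL_sum: "(\<And>i. i \<in> A \<Longrightarrow> f i \<in> QL \<xi>) \<Longrightarrow> sum f A \<in> QL \<xi>"
  by (induction A rule: infinite_finite_induct) (auto intro: QL_add QL_0)

lemma QL_prod: "(\<And>i. i \<in> A \<Longrightarrow> f i \<in> QL \<xi>) \<Longrightarrow> prod f A \<in> QL \<xi>"
  by (induction A rule: infinite_finite_induct) (auto intro: QL_mult QL_1)

lemma QL_poly: "x \<in> QL \<xi> \<Longrightarrow> poly (rp q) x \<in> QL \<xi>"
  by (induction q) (auto intro!: QL_add QL_mult QL_of_rat simp: hom_distribs QL_0)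

lemma QL_poly_int: "x \<in> QL \<xi> \<Longrightarrow> poly (of_int_poly q) x \<in> QL \<xi>"
  using QL_poly[of x \<xi> "of_int_poly q"] by (simp add: rp_of_int)

section \<open>Automorphisms\<close>

locale aut =
  fixes \<xi> :: complex and \<sigma> :: "complex \<Rightarrow> complex"
  assumes aut: "\<sigma> \<in> Aut_L \<xi>"
begin

lemma bij: "bij_betw \<sigma> (QL \<xi>) (QL \<xi>)" using aut unfolding Aut_L_def by blast
lemma add: "x \<in> QL \<xi> \<Longrightarrow> y \<in> QL \<xi> \<Longrightarrow> \<sigma> (x + y) = \<sigma> x + \<sigma> y" using aut unfolding Aut_L_def by blast
lemma mult: "x \<in> QL \<xi> \<Longrightarrow> y \<in> QL \<xi> \<Longrightarrow> \<sigma> (x * y) = \<sigma> x * \<sigma> y" using aut unfolding Aut_L_def by blast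
lemma one: "\<sigma> 1 = 1" using aut unfolding Aut_L_def by blast
lemma outside: "x \<notin> QL \<xi> \<Longrightarrow> \<sigma> x = x" using aut unfolding Aut_L_def by blast
lemma QL: "x \<in> QL \<xi> \<Longrightarrow> \<sigma> x \<in> QL \<xi>" using bij bij_betwE by blast

lemma zero: "\<sigma> 0 = 0"
  using add[OF QL_0 QL_0] by simp

lemma minus: "x \<in> QL \<xi> \<Longrightarrow> \<sigma> (- x) = - \<sigma> x"
  using add[OF QL_minus, of x x] zero by (simp add: eq_neg_iff_add_eq_0)

lemma diff: "x \<in> QL \<xi> \<Longrightarrow> y \<in> QL \<xi> \<Longrightarrow> \<sigma> (x - y) = \<sigma> x - \<sigma> y"
  using add[OF _ QL_minus, of x y] minus by simp

lemma of_nat: "\<sigma> (of_nat n) = of_nat n"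
proof (induction n)
  case 0 thus ?case using zero by simp
next
  case (Suc n)
  have "\<sigma> (of_nat (Suc n)) = \<sigma> (1 + of_nat n)" by simp
  also have "\<dots> = 1 + of_nat n" using add[OF QL_1 QL_of_int[of "int n"]] one Suc by simp
  finally show ?case by simp
qed

lemma of_int: "\<sigma> (of_int n) = of_int n"
proof (cases "n \<ge> 0")
  case True thus ?thesis using of_nat[of "nat n"] by simp
next
  case False
  have m: "of_nat (nat (-n)) \<in> QL \<xi>" by (rule QL_of_nat)
  have "\<sigma> (of_int n) = \<sigma> (- of_nat (nat (- n)))" using False by simp
  also have "\<dots> = - of_nat (nat (-n))" by (simp only: minus[OF m] of_nat)
  finally show ?thesis using False by simp
qed

lemma of_rat: "\<sigma> (of_rat r) = of_rat r"
proof -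
  obtain a b where ab: "quotient_of r = (a, b)" by (cases "quotient_of r")
  have b: "b > 0" using quotient_of_denom_pos[OF ab] .
  have r: "r = of_int a / of_int b" using quotient_of_div[OF ab] .
  have "\<sigma> (of_rat r) * of_int b = \<sigma> (of_rat r * of_int b)"
    using mult[OF QL_of_rat QL_of_int] of_int by simp
  also have "of_rat r * (of_int b :: complex) = of_int a" using b r by (simp add: of_rat_divide)
  finally have "\<sigma> (of_rat r) * of_int b = of_int a" using of_int by simp
  hence "\<sigma> (of_rat r) = of_int a / of_int b" using b by (simp add: field_simps)
  thus ?thesis using r by (simp add: of_rat_divide)
qed

lemma power: "x \<in> QL \<xi> \<Longrightarrow> \<sigma> (x ^ n) = \<sigma> x ^ n"
  by (induction n) (auto simp: one mult QL_power)

lemma sum: "(\<And>i. i \<in> A \<Longrightarrow> f i \<in> QL \<xi>) \<Longrightarrow> \<sigma> (sum f A) = (\<Sum>i\<in>A. \<sigma> (f i))"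
  by (induction A rule: infinite_finite_induct) (auto simp: zero add QL_sum)

lemma prod: "(\<And>i. i \<in> A \<Longrightarrow> f i \<in> QL \<xi>) \<Longrightarrow> \<sigma> (prod f A) = (\<Prod>i\<in>A. \<sigma> (f i))"
  by (induction A rule: infinite_finite_induct) (auto simp: one mult QL_prod)

lemma poly: "x \<in> QL \<xi> \<Longrightarrow> \<sigma> (poly (rp q) x) = poly (rp q) (\<sigma> x)"
proof (induction q)
  case 0 thus ?case using zero by simp
next
  case (pCons a q)
  have "\<sigma> (poly (rp (pCons a q)) x) = \<sigma> (of_rat a + x * poly (rp q) x)" by (simp add: hom_distribs)
  also have "\<dots> = of_rat a + \<sigma> x * \<sigma> (poly (rp q) x)"
    using pCons by (simp add: add mult QL_of_rat QL_mult QL_poly of_rat)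
  finally show ?case using pCons by (simp add: hom_distribs)
qed

lemma poly_int: "x \<in> QL \<xi> \<Longrightarrow> \<sigma> (poly (of_int_poly q) x) = poly (of_int_poly q) (\<sigma> x)"
  using poly[of x "of_int_poly q"] by (simp add: rp_of_int)

lemma inj: "inj \<sigma>"
proof (rule injI)
  fix x y assume eq: "\<sigma> x = \<sigma> y"
  show "x = y"
  proof (cases "x \<in> QL \<xi>"; cases "y \<in> QL \<xi>")
    assume "x \<in> QL \<xi>" "y \<in> QL \<xi>" thus ?thesis using eq inj_onD[OF bij_betw_imp_inj_on[OF bij]] by blast
  next
    assume "x \<in> QL \<xi>" "y \<notin> QL \<xi>" thus ?thesis using eq QL outside by metis
  next
    assume "x \<notin> QL \<xi>" "y \<in> QL \<xi>" thus ?thesis using eq QL outside by metis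
  next
    assume "x \<notin> QL \<xi>" "y \<notin> QL \<xi>" thus ?thesis using eq outside by metis
  qed
qed

lemma surj: "surj \<sigma>"
proof -
  have "y \<in> range \<sigma>" for y
  proof (cases "y \<in> QL \<xi>")
    case True thus ?thesis using bij unfolding bij_betw_def by auto
  next
    case False thus ?thesis using outside by (metis rangeI)
  qed
  thus ?thesis by blast
qed

lemma bij_UNIV: "bij \<sigma>" using inj surj by (simp add: bij_def)

lemma inv_apply: "inv \<sigma> (\<sigma> x) = x" using inj by simp
lemma apply_inv: "\<sigma> (inv \<sigma> x) = x" using surj by (simp add: surj_f_inv_f)

lemma QL_iff: "\<sigma> x \<in> QL \<xi> \<longleftrightarrow> x \<in> QL \<xi>"
  using QL outside by metis

lemma inv_QL: "x \<in> QL \<xi> \<Longrightarrow> inv \<sigma> x \<in> QL \<xi>"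
  using QL_iff apply_inv by metis

lemma inv_aut: "inv \<sigma> \<in> Aut_L \<xi>"
proof -
  have b: "bij_betw (inv \<sigma>) (QL \<xi>) (QL \<xi>)"
    unfolding bij_betw_def
  proof
    show "inj_on (inv \<sigma>) (QL \<xi>)" by (metis bij_UNIV bij_imp_bij_inv bij_is_inj inj_on_subset subset_UNIV)
    show "inv \<sigma> ` QL \<xi> = QL \<xi>"
    proof
      show "inv \<sigma> ` QL \<xi> \<subseteq> QL \<xi>" using inv_QL by blast
      show "QL \<xi> \<subseteq> inv \<sigma> ` QL \<xi>" using QL inv_apply by (metis image_eqI subsetI)
    qed
  qed
  have h: "inv \<sigma> (x + y) = inv \<sigma> x + inv \<sigma> y \<and> inv \<sigma> (x * y) = inv \<sigma> x * inv \<sigma> y"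
    if "x \<in> QL \<xi>" "y \<in> QL \<xi>" for x y
  proof -
    have "\<sigma> (inv \<sigma> x + inv \<sigma> y) = x + y" "\<sigma> (inv \<sigma> x * inv \<sigma> y) = x * y"
      using add mult inv_QL that apply_inv by auto
    thus ?thesis using inv_apply by metis
  qed
  have "inv \<sigma> 1 = 1" using one inv_apply by metis
  moreover have "x \<notin> QL \<xi> \<Longrightarrow> inv \<sigma> x = x" for x using outside inv_apply by metis
  ultimately show ?thesis unfolding Aut_L_def using b h by blast
qed

end

lemma aut_comp: "\<sigma> \<in> Aut_L \<xi> \<Longrightarrow> \<tau> \<in> Aut_L \<xi> \<Longrightarrow> \<sigma> \<circ> \<tau> \<in> Aut_L \<xi>"
proof -
  assume s: "\<sigma> \<in> Aut_L \<xi>" and t: "\<tau> \<in> Aut_L \<xi>"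
  interpret s: aut \<xi> \<sigma> by (rule aut.intro, fact)
  interpret t: aut \<xi> \<tau> by (rule aut.intro, fact)
  have "bij_betw (\<sigma> \<circ> \<tau>) (QL \<xi>) (QL \<xi>)" using bij_betw_trans[OF t.bij s.bij] .
  moreover have "\<forall>x\<in>QL \<xi>. \<forall>y\<in>QL \<xi>. (\<sigma> \<circ> \<tau>) (x + y) = (\<sigma> \<circ> \<tau>) x + (\<sigma> \<circ> \<tau>) y \<and> (\<sigma> \<circ> \<tau>) (x * y) = (\<sigma> \<circ> \<tau>) x * (\<sigma> \<circ> \<tau>) y"
    by (simp add: s.add s.mult t.add t.mult t.QL)
  moreover have "(\<sigma> \<circ> \<tau>) 1 = 1" by (simp add: s.one t.one)
  moreover have "\<forall>x. x \<notin> QL \<xi> \<longrightarrow> (\<sigma> \<circ> \<tau>) x = x" by (simp add: s.outside t.outside)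
  ultimately show ?thesis unfolding Aut_L_def by blast
qed

lemma aut_id: "id \<in> Aut_L \<xi>"
  unfolding Aut_L_def by (auto simp: bij_betw_id)

lemma aut_determined:
  assumes "\<sigma> \<in> Aut_L \<xi>" "\<tau> \<in> Aut_L \<xi>" "\<sigma> \<xi> = \<tau> \<xi>"
  shows "\<sigma> = \<tau>"
proof
  interpret s: aut \<xi> \<sigma> by (rule aut.intro, fact)
  interpret t: aut \<xi> \<tau> by (rule aut.intro, fact)
  fix x show "\<sigma> x = \<tau> x"
  proof (cases "x \<in> QL \<xi>")
    case True then obtain q where "x = poly (rp q) \<xi>" by (rule QL_cases)
    thus ?thesis using s.poly[OF QL_xi] t.poly[OF QL_xi] assms(3) by simp
  next
    case False thus ?thesis using s.outside t.outside by simp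
  qed
qed

lemma rat_alg_int:
  assumes "alg_int (of_rat r)"
  shows "r \<in> \<int>"
proof -
  from assms obtain q :: "int poly" where q: "lead_coeff q = 1" "poly (of_int_poly q) (of_rat r :: complex) = 0"
    unfolding alg_int_def by auto
  have "of_rat (poly (of_int_poly q) r) = poly (rp (of_int_poly q)) (of_rat r :: complex)"
    by (rule of_rat_hom.poly_map_poly[symmetric])
  also have "\<dots> = 0" using q(2) by (simp add: rp_of_int)
  finally have q0: "poly (of_int_poly q) r = 0" by simp
  obtain a b where ab: "quotient_of r = (a, b)" by (cases "quotient_of r")
  have b: "b > 0" using quotient_of_denom_pos[OF ab] .
  have r: "r = of_int a / of_int b" using quotient_of_div[OF ab] .
  have cop: "coprime a b" using quotient_of_coprime[OF ab] .
  define n where "n = degree q"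
  have "0 = of_int b ^ n * poly (of_int_poly q) r" using q0 by simp
  also have "\<dots> = of_int b ^ n * (\<Sum>i\<le>n. of_int (coeff q i) * r ^ i)"
    by (simp add: poly_altdef n_def degree_map_poly)
  also have "\<dots> = (\<Sum>i\<le>n. of_int (coeff q i) * (of_int b ^ n * r ^ i))"
    by (simp add: sum_distrib_left algebra_simps)
  also have "\<dots> = (\<Sum>i\<le>n. of_int (coeff q i * a ^ i * b ^ (n - i)))"
  proof (rule sum.cong)
    fix i assume "i \<in> {..n}" hence i: "i \<le> n" by simp
    have "(of_int b :: rat) ^ n = of_int b ^ i * of_int b ^ (n - i)"
      using i by (simp add: power_add[symmetric])
    hence "(of_int b :: rat) ^ n * r ^ i = (of_int b * r) ^ i * of_int b ^ (n - i)"
      by (simp add: power_mult_distrib)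
    also have "of_int b * r = of_int a" using b r by simp
    finally show "of_int (coeff q i) * (of_int b ^ n * r ^ i) = (of_int (coeff q i * a ^ i * b ^ (n - i)) :: rat)"
      by simp
  qed simp
  also have "\<dots> = of_int (\<Sum>i\<le>n. coeff q i * a ^ i * b ^ (n - i))" by simp
  finally have s0: "(\<Sum>i\<le>n. coeff q i * a ^ i * b ^ (n - i)) = 0" by linarith
  have "(\<Sum>i\<le>n. coeff q i * a ^ i * b ^ (n - i)) = (\<Sum>i<n. coeff q i * a ^ i * b ^ (n - i)) + a ^ n"
    using q(1) by (simp add: lessThan_Suc_atMost[symmetric] n_def)
  hence an: "a ^ n = - (\<Sum>i<n. coeff q i * a ^ i * b ^ (n - i))" using s0 by simp
  have "b dvd (\<Sum>i<n. coeff q i * a ^ i * b ^ (n - i))"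
  proof (rule dvd_sum)
    fix i assume "i \<in> {..<n}" hence "n - i = Suc (n - i - 1)" by simp
    thus "b dvd coeff q i * a ^ i * b ^ (n - i)" by (metis dvd_mult dvd_triv_left power_Suc)
  qed
  hence "b dvd a ^ n" using an by simp
  moreover have "coprime (a ^ n) b" using cop by simp
  ultimately have "is_unit b" by (metis coprime_common_divisor dvd_refl)
  hence "b = 1" using b by simp
  thus ?thesis using r by simp
qed

locale gal =
  fixes F :: "int poly" and \<xi> :: complex
  assumes monic: "lead_coeff F = 1"
    and root: "poly (of_int_poly F) \<xi> = 0"
    and galois: "card (Aut_L \<xi>) = degree F"
begin

abbreviation "G \<equiv> Aut_L \<xi>"
abbreviation "d \<equiv> degree F"
abbreviation "Fq \<equiv> (of_int_poly F :: complex poly)"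

lemma d_pos: "d > 0" using alg_int_degree_pos[OF monic root] .

lemma finite_G: "finite G" using galois d_pos card_ge_0_finite by metis

lemma aut_interp: "\<sigma> \<in> G \<Longrightarrow> aut \<xi> \<sigma>" by (rule aut.intro)

lemma root_conj: "\<sigma> \<in> G \<Longrightarrow> poly Fq (\<sigma> \<xi>) = 0"
proof -
  assume s: "\<sigma> \<in> G"
  interpret aut \<xi> \<sigma> by (rule aut.intro, fact)
  have "poly Fq (\<sigma> \<xi>) = \<sigma> (poly Fq \<xi>)" using poly_int[OF QL_xi] by simp
  thus ?thesis using root zero by simp
qed

lemma inj_xi: "inj_on (\<lambda>\<sigma>. \<sigma> \<xi>) G"
  by (rule inj_onI) (use aut_determined in blast)

lemma card_roots: "card ((\<lambda>\<sigma>. \<sigma> \<xi>) ` G) = d"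
  using card_image[OF inj_xi] galois by simp

lemma poly_vanish:
  fixes h :: "complex poly"
  assumes "degree h < d" "\<forall>\<sigma>\<in>G. poly h (\<sigma> \<xi>) = 0"
  shows "h = 0"
proof (rule ccontr)
  assume h: "h \<noteq> 0"
  have "(\<lambda>\<sigma>. \<sigma> \<xi>) ` G \<subseteq> {x. poly h x = 0}" using assms(2) by auto
  hence "d \<le> card {x. poly h x = 0}"
    using card_mono[OF poly_roots_finite[OF h]] card_roots by metis
  also have "\<dots> \<le> degree h" using card_poly_roots_bound[OF h] .
  finally show False using assms(1) by simp
qed

lemma Fq_prod: "Fq = (\<Prod>\<sigma>\<in>G. [:- \<sigma> \<xi>, 1:])"
proof -
  define P where "P = (\<Prod>\<sigma>\<in>G. [:- \<sigma> \<xi>, 1:])"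
  have dP: "degree P = d"
    unfolding P_def using galois by (subst degree_prod_eq_sum_degree) auto
  have lP: "lead_coeff P = 1" unfolding P_def by (simp add: lead_coeff_prod)
  have dF: "degree Fq = d" by (simp add: degree_map_poly)
  have lF: "lead_coeff Fq = 1" using monic by (simp add: degree_map_poly)
  define h where "h = Fq - P"
  have "degree h < d"
  proof (cases "h = 0")
    case True thus ?thesis using d_pos by simp
  next
    case False
    have le: "degree h \<le> d" unfolding h_def using degree_diff_le[of Fq d P] dP dF by simp
    have "coeff h d = 0" unfolding h_def using lP lF dP dF by simp
    hence "degree h \<noteq> d" using False leading_coeff_0_iff by metis
    thus ?thesis using le by simp
  qed
  moreover have "\<forall>\<sigma>\<in>G. poly h (\<sigma> \<xi>) = 0"
  proof
    fix \<sigma> assume s: "\<sigma> \<in> G"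
    have "poly P (\<sigma> \<xi>) = 0" unfolding P_def poly_prod
      using s finite_G by (intro prod_zero) auto
    thus "poly h (\<sigma> \<xi>) = 0" unfolding h_def using root_conj[OF s] by simp
  qed
  ultimately have "h = 0" by (rule poly_vanish)
  thus ?thesis unfolding h_def P_def by simp
qed

lemma QL_reduce:
  assumes "y \<in> QL \<xi>"
  obtains q where "y = poly (rp q) \<xi>" "degree q < d"
proof -
  from assms obtain q0 where y: "y = poly (rp q0) \<xi>" by (rule QL_cases)
  define Fr where "Fr = (of_int_poly F :: rat poly)"
  have Fr0: "Fr \<noteq> 0" and dFr: "degree Fr = d" unfolding Fr_def using monic by (auto simp: degree_map_poly)
  define q where "q = q0 mod Fr"
  have "q0 = q0 div Fr * Fr + q" unfolding q_def by simp
  hence "rp q0 = rp (q0 div Fr) * rp Fr + rp q" by (metis rp_add rp_mult)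
  moreover have "poly (rp Fr) \<xi> = 0" unfolding Fr_def rp_of_int using root .
  ultimately have "y = poly (rp q) \<xi>" using y by simp
  moreover have "degree q < d"
    using degree_mod_less[OF Fr0, of q0] d_pos dFr unfolding q_def by fastforce
  ultimately show ?thesis using that by blast
qed

lemma fixed_rat:
  assumes y: "y \<in> QL \<xi>" and fx: "\<forall>\<tau>\<in>G. \<tau> y = y"
  shows "\<exists>r. y = of_rat r"
proof -
  obtain q where q: "y = poly (rp q) \<xi>" "degree q < d" using QL_reduce[OF y] by blast
  define h where "h = rp q - [:y:]"
  have "degree q \<le> d - 1" using q(2) by simp
  hence "degree h \<le> d - 1"
    unfolding h_def using degree_diff_le[of "rp q" "d - 1" "[:y:]"] by (simp add: degree_map_poly)
  hence "degree h < d" using d_pos by linarith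
  moreover have "\<forall>\<sigma>\<in>G. poly h (\<sigma> \<xi>) = 0"
  proof
    fix \<sigma> assume s: "\<sigma> \<in> G"
    interpret aut \<xi> \<sigma> by (rule aut.intro, fact)
    have "poly (rp q) (\<sigma> \<xi>) = \<sigma> y" using q(1) poly[OF QL_xi] by simp
    thus "poly h (\<sigma> \<xi>) = 0" unfolding h_def using fx s by simp
  qed
  ultimately have "h = 0" by (rule poly_vanish)
  hence "rp q = [:y:]" unfolding h_def by simp
  hence "coeff (rp q) 0 = y" by simp
  thus ?thesis by (metis coeff_map_poly of_rat_0)
qed

lemma comp_bij: "\<tau> \<in> G \<Longrightarrow> bij_betw ((\<circ>) \<tau>) G G"
proof -
  assume t: "\<tau> \<in> G"
  interpret t: aut \<xi> \<tau> by (rule aut.intro, fact)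
  show ?thesis
  proof (rule bij_betw_byWitness[where f' = "(\<circ>) (inv \<tau>)"])
    show "\<forall>a\<in>G. inv \<tau> \<circ> (\<tau> \<circ> a) = a" by (auto simp: t.inv_apply)
    show "\<forall>a'\<in>G. \<tau> \<circ> (inv \<tau> \<circ> a') = a'" by (auto simp: t.apply_inv)
    show "(\<circ>) \<tau> ` G \<subseteq> G" using aut_comp t by blast
    show "(\<circ>) (inv \<tau>) ` G \<subseteq> G" using aut_comp t.inv_aut by blast
  qed
qed

definition tr :: "complex \<Rightarrow> complex" where "tr y = (\<Sum>\<sigma>\<in>G. \<sigma> y)"
definition nm :: "complex \<Rightarrow> complex" where "nm y = (\<Prod>\<sigma>\<in>G. \<sigma> y)"

lemma tr_QL: "y \<in> QL \<xi> \<Longrightarrow> tr y \<in> QL \<xi>"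
  unfolding tr_def by (intro QL_sum) (use aut.QL aut.intro in blast)

lemma nm_QL: "y \<in> QL \<xi> \<Longrightarrow> nm y \<in> QL \<xi>"
  unfolding nm_def by (intro QL_prod) (use aut.QL aut.intro in blast)

lemma tr_fixed: "y \<in> QL \<xi> \<Longrightarrow> \<tau> \<in> G \<Longrightarrow> \<tau> (tr y) = tr y"
proof -
  assume y: "y \<in> QL \<xi>" and t: "\<tau> \<in> G"
  interpret t: aut \<xi> \<tau> by (rule aut.intro, fact)
  have "\<tau> (tr y) = (\<Sum>\<sigma>\<in>G. \<tau> (\<sigma> y))" unfolding tr_def
    by (rule t.sum) (use aut.QL aut.intro y in blast)
  also have "\<dots> = (\<Sum>\<sigma>\<in>G. (\<lambda>\<rho>. \<rho> y) (\<tau> \<circ> \<sigma>))" by simp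
  also have "\<dots> = tr y" unfolding tr_def by (rule sum.reindex_bij_betw[OF comp_bij[OF t]])
  finally show ?thesis .
qed

lemma nm_fixed: "y \<in> QL \<xi> \<Longrightarrow> \<tau> \<in> G \<Longrightarrow> \<tau> (nm y) = nm y"
proof -
  assume y: "y \<in> QL \<xi>" and t: "\<tau> \<in> G"
  interpret t: aut \<xi> \<tau> by (rule aut.intro, fact)
  have "\<tau> (nm y) = (\<Prod>\<sigma>\<in>G. \<tau> (\<sigma> y))" unfolding nm_def
    by (rule t.prod) (use aut.QL aut.intro y in blast)
  also have "\<dots> = (\<Prod>\<sigma>\<in>G. (\<lambda>\<rho>. \<rho> y) (\<tau> \<circ> \<sigma>))" by simp
  also have "\<dots> = nm y" unfolding nm_def by (rule prod.reindex_bij_betw[OF comp_bij[OF t]])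
  finally show ?thesis .
qed

lemma tr_rat: "y \<in> QL \<xi> \<Longrightarrow> \<exists>r. tr y = of_rat r"
  using fixed_rat tr_QL tr_fixed by blast

lemma QL_inverse:
  assumes y: "y \<in> QL \<xi>" "y \<noteq> 0"
  shows "inverse y \<in> QL \<xi>"
proof -
  obtain r where r: "nm y = of_rat r" using fixed_rat[OF nm_QL[OF y(1)]] nm_fixed[OF y(1)] by blast
  have nz: "\<sigma> y \<noteq> 0" if "\<sigma> \<in> G" for \<sigma>
  proof
    interpret aut \<xi> \<sigma> by (rule aut.intro, fact)
    assume "\<sigma> y = 0" hence "\<sigma> y = \<sigma> 0" using zero by simp
    thus False using inj y(2) by (meson injD)
  qed
  define P where "P = (\<Prod>\<sigma>\<in>G - {id}. \<sigma> y)"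
  have yP: "nm y = y * P"
    unfolding nm_def P_def using prod.remove[OF finite_G aut_id, of "\<lambda>\<sigma>. \<sigma> y"] by simp
  have "nm y \<noteq> 0" unfolding nm_def using nz finite_G by (simp add: prod_zero_iff)
  hence r0: "r \<noteq> 0" using r by simp
  have "y * P \<noteq> 0" using r r0 yP by simp
  have "y * (P * of_rat (inverse r)) = (y * P) * of_rat (inverse r)" by (simp add: mult.assoc)
  also have "\<dots> = of_rat (r * inverse r)" using yP r by (simp add: of_rat_mult)
  also have "\<dots> = 1" using r0 by simp
  finally have "y * (P * of_rat (inverse r)) = 1" .
  hence "inverse y = P * of_rat (inverse r)" by (rule inverse_unique)
  also have "\<dots> \<in> QL \<xi>" unfolding P_def
    by (intro QL_mult QL_prod QL_of_rat) (use aut.QL aut.intro y in blast)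
  finally show ?thesis .
qed

section \<open>Ring of integers\<close>

lemma OL_iff: "x \<in> OL \<xi> \<longleftrightarrow> x \<in> QL \<xi> \<and> alg_int x" unfolding OL_def by simp

lemma OL_add: "x \<in> OL \<xi> \<Longrightarrow> y \<in> OL \<xi> \<Longrightarrow> x + y \<in> OL \<xi>"
  and OL_mult: "x \<in> OL \<xi> \<Longrightarrow> y \<in> OL \<xi> \<Longrightarrow> x * y \<in> OL \<xi>"
  and OL_diff: "x \<in> OL \<xi> \<Longrightarrow> y \<in> OL \<xi> \<Longrightarrow> x - y \<in> OL \<xi>"
  and OL_minus: "x \<in> OL \<xi> \<Longrightarrow> - x \<in> OL \<xi>"
  and OL_of_int: "of_int k \<in> OL \<xi>"
  and OL_of_nat: "of_nat n \<in> OL \<xi>"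
  and OL_power: "x \<in> OL \<xi> \<Longrightarrow> x ^ n \<in> OL \<xi>"
  by (auto simp: OL_iff intro: QL_add QL_mult QL_diff QL_minus QL_of_int QL_of_nat QL_power
      alg_int_closed alg_int_diff alg_int_minus alg_int_of_int alg_int_power alg_int_of_int[of "int n", simplified])

lemma OL_0: "0 \<in> OL \<xi>" and OL_1: "1 \<in> OL \<xi>"
  using OL_of_int[of 0] OL_of_int[of 1] by simp_all

lemma OL_sum: "(\<And>i. i \<in> A \<Longrightarrow> f i \<in> OL \<xi>) \<Longrightarrow> sum f A \<in> OL \<xi>"
  by (induction A rule: infinite_finite_induct) (auto intro: OL_add simp: OL_0)

lemma OL_prod: "(\<And>i. i \<in> A \<Longrightarrow> f i \<in> OL \<xi>) \<Longrightarrow> prod f A \<in> OL \<xi>"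
  by (induction A rule: infinite_finite_induct) (auto intro: OL_mult simp: OL_1)

lemma OL_xi: "\<xi> \<in> OL \<xi>"
  using QL_xi monic root unfolding OL_iff alg_int_def by blast

lemma OL_poly_int: "x \<in> OL \<xi> \<Longrightarrow> poly (of_int_poly u) x \<in> OL \<xi>"
  by (auto simp: OL_iff intro: QL_poly_int alg_int_poly)

lemma OL_aut: "\<sigma> \<in> G \<Longrightarrow> x \<in> OL \<xi> \<Longrightarrow> \<sigma> x \<in> OL \<xi>"
proof -
  assume s: "\<sigma> \<in> G" and x: "x \<in> OL \<xi>"
  interpret aut \<xi> \<sigma> by (rule aut.intro, fact)
  from x obtain q where q: "lead_coeff q = 1" "poly (of_int_poly q) x = 0" and xL: "x \<in> QL \<xi>"
    unfolding OL_iff alg_int_def by auto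
  have "poly (of_int_poly q) (\<sigma> x) = \<sigma> (poly (of_int_poly q) x)" using poly_int[OF xL] by simp
  also have "\<dots> = 0" using q(2) zero by simp
  finally show ?thesis using q(1) QL[OF xL] unfolding OL_iff alg_int_def by blast
qed

lemma tr_int: "y \<in> OL \<xi> \<Longrightarrow> \<exists>k. tr y = of_int k"
proof -
  assume y: "y \<in> OL \<xi>"
  obtain r where r: "tr y = of_rat r" using tr_rat y OL_iff by blast
  have "alg_int (tr y)" unfolding tr_def
    by (rule alg_int_sum) (use OL_aut y OL_iff in blast)
  hence "r \<in> \<int>" using rat_alg_int r by simp
  then obtain k where "r = of_int k" by (elim Ints_cases)
  thus ?thesis using r by simp
qed

end

lemma poly_sum_lt:
  fixes x :: "'a::{comm_semiring_0,semiring_1}"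
  assumes "degree p < n"
  shows "poly p x = (\<Sum>i<n. coeff p i * x ^ i)"
proof -
  have "poly p x = (\<Sum>i\<le>degree p. coeff p i * x ^ i)" by (rule poly_altdef)
  also have "\<dots> = (\<Sum>i<n. coeff p i * x ^ i)"
    by (rule sum.mono_neutral_left) (use assms in \<open>auto simp: coeff_eq_0\<close>)
  finally show ?thesis .
qed

context gal begin

definition lin :: "(nat \<Rightarrow> rat) \<Rightarrow> complex" where
  "lin c = (\<Sum>i<d. of_rat (c i) * \<xi> ^ i)"

lemma lin_QL: "lin c \<in> QL \<xi>"
  unfolding lin_def by (intro QL_sum QL_mult QL_of_rat QL_power QL_xi)

lemma QL_coords: "x \<in> QL \<xi> \<Longrightarrow> \<exists>c. x = lin c"
proof -
  assume "x \<in> QL \<xi>"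
  then obtain q where q: "x = poly (rp q) \<xi>" "degree q < d" by (rule QL_reduce)
  have "x = (\<Sum>i<d. coeff (rp q) i * \<xi> ^ i)" using q poly_sum_lt[of "rp q" d] by (simp add: degree_map_poly)
  thus ?thesis unfolding lin_def by (intro exI[of _ "coeff q"]) (simp add: coeff_map_poly)
qed

lemma aut_lin: "\<sigma> \<in> G \<Longrightarrow> \<sigma> (lin c) = (\<Sum>i<d. of_rat (c i) * \<sigma> \<xi> ^ i)"
proof -
  assume s: "\<sigma> \<in> G"
  interpret aut \<xi> \<sigma> by (rule aut.intro, fact)
  show ?thesis unfolding lin_def
    by (subst sum) (auto intro!: sum.cong QL_mult QL_of_rat QL_power QL_xi simp: mult of_rat power QL_xi QL_of_rat QL_power)
qed

lemma lin_zero: "lin c = 0 \<Longrightarrow> i < d \<Longrightarrow> c i = 0"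
proof -
  assume z: "lin c = 0" and i: "i < d"
  define q where "q = (\<Sum>k<d. monom (c k) k)"
  have dq: "degree (rp q) < d"
    unfolding q_def using d_pos
    by (simp add: degree_map_poly) (intro degree_sum_less; auto intro: le_less_trans[OF degree_monom_le])
  have cq: "coeff q k = c k" if "k < d" for k
    unfolding q_def coeff_sum using that by (simp add: coeff_monom)
  have "\<forall>\<sigma>\<in>G. poly (rp q) (\<sigma> \<xi>) = 0"
  proof
    fix \<sigma> assume s: "\<sigma> \<in> G"
    interpret aut \<xi> \<sigma> by (rule aut.intro, fact)
    have "poly (rp q) (\<sigma> \<xi>) = (\<Sum>k<d. coeff (rp q) k * \<sigma> \<xi> ^ k)"
      by (rule poly_sum_lt[OF dq])
    also have "\<dots> = (\<Sum>k<d. of_rat (c k) * \<sigma> \<xi> ^ k)"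
      by (intro sum.cong) (auto simp: coeff_map_poly cq)
    also have "\<dots> = \<sigma> (lin c)" using aut_lin[OF s] by simp
    finally show "poly (rp q) (\<sigma> \<xi>) = 0" using z zero by simp
  qed
  hence "rp q = 0" using poly_vanish dq by blast
  hence "q = 0" by simp
  hence "coeff q i = 0" by simp
  moreover have "coeff q i = c i" unfolding q_def coeff_sum using i by (simp add: coeff_monom)
  ultimately show ?thesis by simp
qed

lemma tr_lin_comb:
  assumes "\<And>i. i \<in> A \<Longrightarrow> z i \<in> QL \<xi>" "finite A"
  shows "tr (\<Sum>i\<in>A. of_rat (c i) * z i) = (\<Sum>i\<in>A. of_rat (c i) * tr (z i))"
proof -
  have "tr (\<Sum>i\<in>A. of_rat (c i) * z i) = (\<Sum>\<sigma>\<in>G. \<Sum>i\<in>A. of_rat (c i) * \<sigma> (z i))"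
    unfolding tr_def
  proof (rule sum.cong)
    fix \<sigma> assume s: "\<sigma> \<in> G"
    interpret aut \<xi> \<sigma> by (rule aut.intro, fact)
    show "\<sigma> (\<Sum>i\<in>A. of_rat (c i) * z i) = (\<Sum>i\<in>A. of_rat (c i) * \<sigma> (z i))"
      using assms by (subst sum) (auto intro!: sum.cong QL_mult QL_of_rat simp: mult of_rat QL_of_rat)
  qed simp
  also have "\<dots> = (\<Sum>i\<in>A. of_rat (c i) * tr (z i))"
    unfolding tr_def by (subst sum.swap) (simp add: sum_distrib_left)
  finally show ?thesis .
qed

lemma tr_one: "tr 1 = of_nat d"
proof -
  have "tr 1 = (\<Sum>\<sigma>\<in>G. 1)" unfolding tr_def by (rule sum.cong) (auto intro: aut.one aut.intro)
  thus ?thesis using galois by simp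
qed

lemma tr_mult_lin:
  assumes y: "y \<in> QL \<xi>"
  shows "tr (y * lin c) = (\<Sum>i<d. of_rat (c i) * tr (y * \<xi> ^ i))"
proof -
  have "y * lin c = (\<Sum>i<d. of_rat (c i) * (y * \<xi> ^ i))" unfolding lin_def
    by (simp add: sum_distrib_left algebra_simps)
  thus ?thesis using tr_lin_comb[of "{..<d}" "\<lambda>i. y * \<xi> ^ i" c] y
    by (simp add: QL_mult QL_power QL_xi)
qed

definition sp :: "nat \<Rightarrow> int" where "sp k = (SOME m. tr (\<xi> ^ k) = of_int m)"

lemma sp: "tr (\<xi> ^ k) = of_int (sp k)"
  unfolding sp_def by (rule someI_ex, rule tr_int, intro OL_power OL_xi)

definition Mq :: "rat mat" where "Mq = mat d d (\<lambda>(i,j). of_int (sp (i + j)))"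

lemma Mq_carrier: "Mq \<in> carrier_mat d d" unfolding Mq_def by simp

lemma tr_lin_xi: "tr (lin c * \<xi> ^ j) = of_rat (\<Sum>i<d. c i * of_int (sp (i + j)))"
proof -
  have "lin c * \<xi> ^ j = (\<Sum>i<d. of_rat (c i) * \<xi> ^ (i + j))" unfolding lin_def
    by (simp add: sum_distrib_right sum_distrib_left algebra_simps power_add)
  hence "tr (lin c * \<xi> ^ j) = (\<Sum>i<d. of_rat (c i) * tr (\<xi> ^ (i + j)))"
    using tr_lin_comb[of "{..<d}" "\<lambda>i. \<xi> ^ (i + j)" c] by (simp add: QL_power QL_xi)
  also have "\<dots> = of_rat (\<Sum>i<d. c i * of_int (sp (i + j)))"
    by (simp add: sp of_rat_sum of_rat_mult)
  finally show ?thesis .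
qed

lemma det_Mq: "det Mq \<noteq> 0"
proof
  assume "det Mq = 0"
  then obtain v where v: "v \<in> carrier_vec d" "v \<noteq> 0\<^sub>v d" "Mq *\<^sub>v v = 0\<^sub>v d"
    using det_0_iff_vec_prod_zero_field[OF Mq_carrier] by blast
  define c where "c i = v $ i" for i
  define y where "y = lin c"
  have yL: "y \<in> QL \<xi>" unfolding y_def by (rule lin_QL)
  have tj: "tr (y * \<xi> ^ j) = 0" if j: "j < d" for j
  proof -
    have "(Mq *\<^sub>v v) $ j = (\<Sum>i<d. c i * of_int (sp (i + j)))"
      using j v(1) unfolding Mq_def c_def mult_mat_vec_def scalar_prod_def
      by (auto simp: lessThan_atLeast0 algebra_simps intro!: sum.cong)
    hence "(\<Sum>i<d. c i * of_int (sp (i + j))) = 0" using v(3) j by simp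
    thus ?thesis using tr_lin_xi unfolding y_def by simp
  qed
  have y0: "y = 0"
  proof (rule ccontr)
    assume "y \<noteq> 0"
    hence iL: "inverse y \<in> QL \<xi>" using QL_inverse yL by blast
    then obtain c' where c': "inverse y = lin c'" using QL_coords by blast
    have "tr (y * inverse y) = 0" unfolding c' tr_mult_lin[OF yL] using tj by simp
    moreover have "y * inverse y = 1" using \<open>y \<noteq> 0\<close> by simp
    ultimately show False using tr_one d_pos by simp
  qed
  have "v = 0\<^sub>v d"
  proof (rule eq_vecI)
    fix i assume "i < dim_vec (0\<^sub>v d :: rat vec)"
    hence "i < d" by simp
    thus "v $ i = 0\<^sub>v d $ i" using lin_zero[of c i] y0 unfolding y_def c_def by simp
  qed (use v in simp)
  thus False using v by simp
qed

definition Bq :: "rat mat" where "Bq = (inverse (det Mq)) \<cdot>\<^sub>m adj_mat Mq"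

lemma Bq_carrier: "Bq \<in> carrier_mat d d" unfolding Bq_def using adj_mat(1)[OF Mq_carrier] by simp

lemma Bq_Mq: "Bq * Mq = 1\<^sub>m d"
proof -
  have "Bq * Mq = inverse (det Mq) \<cdot>\<^sub>m (adj_mat Mq * Mq)"
    unfolding Bq_def using mult_smult_assoc_mat[OF adj_mat(1)[OF Mq_carrier] Mq_carrier] .
  also have "\<dots> = 1\<^sub>m d" using adj_mat(3)[OF Mq_carrier] det_Mq by (auto intro!: eq_matI)
  finally show ?thesis .
qed

definition Dq :: int where "Dq = (\<Prod>i<d. \<Prod>j<d. snd (quotient_of (Bq $$ (i,j))))"

lemma Dq_pos: "Dq > 0"
  unfolding Dq_def by (intro prod_pos) (auto intro: quotient_of_denom_pos')

lemma Dq_Bq: "i < d \<Longrightarrow> j < d \<Longrightarrow> of_int Dq * Bq $$ (i,j) \<in> \<int>"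
proof -
  assume i: "i < d" and j: "j < d"
  obtain a b where ab: "quotient_of (Bq $$ (i,j)) = (a, b)" by (cases "quotient_of (Bq $$ (i,j))")
  have "b dvd Dq" unfolding Dq_def
  proof (rule dvd_trans)
    show "b dvd (\<Prod>j'<d. snd (quotient_of (Bq $$ (i,j'))))"
      using dvd_prodI[of "{..<d}" j "\<lambda>j'. snd (quotient_of (Bq $$ (i,j')))"] ab j by simp
    show "(\<Prod>j'<d. snd (quotient_of (Bq $$ (i,j')))) dvd (\<Prod>i'<d. \<Prod>j'<d. snd (quotient_of (Bq $$ (i',j'))))"
      using dvd_prodI[of "{..<d}" i] i by blast
  qed
  then obtain e where e: "Dq = b * e" by blast
  have "b > 0" using quotient_of_denom_pos[OF ab] .
  hence "of_int Dq * Bq $$ (i,j) = of_int (e * a)"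
    using quotient_of_div[OF ab] e by (simp add: field_simps)
  thus ?thesis by simp
qed

lemma index_bound:
  assumes x: "x \<in> OL \<xi>"
  shows "\<exists>u. of_int Dq * x = poly (of_int_poly u) \<xi>"
proof -
  from x have xL: "x \<in> QL \<xi>" by (simp add: OL_iff)
  obtain c where c: "x = lin c" using QL_coords[OF xL] by blast
  have "\<forall>j. \<exists>m. j < d \<longrightarrow> tr (x * \<xi> ^ j) = of_int m"
    using tr_int OL_mult OL_power OL_xi x by blast
  then obtain T where T: "\<And>j. j < d \<Longrightarrow> tr (x * \<xi> ^ j) = of_int (T j)" by metis
  define cv where "cv = vec d c"
  define Tv where "Tv = vec d (\<lambda>j. of_int (T j) :: rat)"
  have cv: "cv \<in> carrier_vec d" unfolding cv_def by simp
  have "Mq *\<^sub>v cv = Tv"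
  proof (rule eq_vecI)
    fix j assume "j < dim_vec Tv" hence j: "j < d" unfolding Tv_def by simp
    have "(Mq *\<^sub>v cv) $ j = (\<Sum>i<d. c i * of_int (sp (i + j)))"
      using j unfolding Mq_def cv_def mult_mat_vec_def scalar_prod_def
      by (auto simp: lessThan_atLeast0 algebra_simps intro!: sum.cong)
    also have "of_rat \<dots> = tr (x * \<xi> ^ j)" using tr_lin_xi c by simp
    also have "\<dots> = of_rat (of_int (T j))" using T[OF j] by simp
    finally show "(Mq *\<^sub>v cv) $ j = Tv $ j" using j unfolding Tv_def by (simp only: of_rat_eq_iff) simp
  qed (simp add: Mq_def Tv_def)
  hence "Bq *\<^sub>v Tv = cv"
    using Bq_Mq cv Bq_carrier Mq_carrier by (metis assoc_mult_mat_vec one_mult_mat_vec)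
  hence ci: "c i = (\<Sum>j<d. Bq $$ (i,j) * of_int (T j))" if "i < d" for i
    using that Bq_carrier unfolding Tv_def cv_def mult_mat_vec_def scalar_prod_def
    by (auto simp: lessThan_atLeast0 dest!: arg_cong[where f = "\<lambda>v. vec_index v i"])
  have "\<forall>i. i < d \<longrightarrow> (\<exists>k::int. of_int Dq * c i = of_int k)"
  proof (intro allI impI)
    fix i assume i: "i < d"
    have "of_int Dq * c i = (\<Sum>j<d. (of_int Dq * Bq $$ (i,j)) * of_int (T j))"
      using ci[OF i] by (simp add: sum_distrib_left algebra_simps)
    also have "\<dots> \<in> \<int>"
    proof (rule Ints_sum)
      fix j assume "j \<in> {..<d}"
      thus "(of_int Dq * Bq $$ (i,j)) * of_int (T j) \<in> \<int>" using Ints_mult[OF Dq_Bq[OF i] Ints_of_int] by simp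
    qed
    finally show "\<exists>k::int. of_int Dq * c i = of_int k" by (auto elim!: Ints_cases)
  qed
  then obtain k where k: "\<And>i. i < d \<Longrightarrow> of_int Dq * c i = of_int (k i)" by metis
  define u where "u = (\<Sum>i<d. monom (k i) i)"
  have du: "degree (of_int_poly u :: complex poly) < d"
    unfolding u_def using d_pos
    by (simp add: degree_map_poly) (intro degree_sum_less; auto intro: le_less_trans[OF degree_monom_le])
  have cu: "coeff u i = k i" if "i < d" for i
    unfolding u_def coeff_sum using that by (simp add: coeff_monom)
  have "poly (of_int_poly u) \<xi> = (\<Sum>i<d. coeff (of_int_poly u) i * \<xi> ^ i)"
    by (rule poly_sum_lt[OF du])
  also have "\<dots> = (\<Sum>i<d. of_int (k i) * \<xi> ^ i)"
    by (intro sum.cong) (auto simp: coeff_map_poly cu)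
  also have "\<dots> = (\<Sum>i<d. of_rat (of_int Dq * c i) * \<xi> ^ i)"
    using k by (intro sum.cong) auto
  also have "\<dots> = of_int Dq * x" unfolding c lin_def
    by (simp add: sum_distrib_left of_rat_mult algebra_simps)
  finally show ?thesis by metis
qed

end

context gal begin

section \<open>Ideals\<close>

lemma ideal_sub: "is_ideal_OL \<xi> I \<Longrightarrow> x \<in> I \<Longrightarrow> x \<in> OL \<xi>"
  unfolding is_ideal_OL_def by blast
lemma ideal_0: "is_ideal_OL \<xi> I \<Longrightarrow> 0 \<in> I"
  unfolding is_ideal_OL_def by blast
lemma ideal_add: "is_ideal_OL \<xi> I \<Longrightarrow> x \<in> I \<Longrightarrow> y \<in> I \<Longrightarrow> x + y \<in> I"
  unfolding is_ideal_OL_def by blast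
lemma ideal_minus: "is_ideal_OL \<xi> I \<Longrightarrow> x \<in> I \<Longrightarrow> - x \<in> I"
  unfolding is_ideal_OL_def by blast
lemma ideal_mult: "is_ideal_OL \<xi> I \<Longrightarrow> r \<in> OL \<xi> \<Longrightarrow> x \<in> I \<Longrightarrow> r * x \<in> I"
  unfolding is_ideal_OL_def by blast
lemma ideal_mult': "is_ideal_OL \<xi> I \<Longrightarrow> r \<in> OL \<xi> \<Longrightarrow> x \<in> I \<Longrightarrow> x * r \<in> I"
  using ideal_mult by (simp add: mult.commute)
lemma ideal_diff: "is_ideal_OL \<xi> I \<Longrightarrow> x \<in> I \<Longrightarrow> y \<in> I \<Longrightarrow> x - y \<in> I"
  using ideal_add[of I x "- y"] ideal_minus by simp
lemma ideal_sum: "is_ideal_OL \<xi> I \<Longrightarrow> (\<And>i. i \<in> A \<Longrightarrow> f i \<in> I) \<Longrightarrow> sum f A \<in> I"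
  by (induction A rule: infinite_finite_induct) (auto intro: ideal_add ideal_0)

lemma prime_ideal: "prime_ideal_OL \<xi> P \<Longrightarrow> is_ideal_OL \<xi> P"
  unfolding prime_ideal_OL_def by blast

lemma prime_ideal_prime: "prime_ideal_OL \<xi> P \<Longrightarrow> x \<in> OL \<xi> \<Longrightarrow> y \<in> OL \<xi> \<Longrightarrow> x * y \<in> P \<Longrightarrow> x \<in> P \<or> y \<in> P"
  unfolding prime_ideal_OL_def by blast

lemma prime_ideal_1: "prime_ideal_OL \<xi> P \<Longrightarrow> 1 \<notin> P"
proof
  assume P: "prime_ideal_OL \<xi> P" and "1 \<in> P"
  hence "\<forall>r\<in>OL \<xi>. r \<in> P" using ideal_mult[OF prime_ideal[OF P], of _ 1] by auto
  hence "P = OL \<xi>" using ideal_sub[OF prime_ideal[OF P]] by blast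
  thus False using P unfolding prime_ideal_OL_def by blast
qed

lemma prime_ideal_int:
  assumes P: "prime_ideal_OL \<xi> P" and p: "prime p" and pP: "of_nat p \<in> P" and kP: "of_int k \<in> P"
  shows "int p dvd k"
proof (rule ccontr)
  assume nd: "\<not> int p dvd k"
  have "prime (int p)" using p by simp
  hence "coprime (int p) k" using nd prime_imp_coprime by blast
  then obtain u v where uv: "u * int p + v * k = 1" using bezout_int[of "int p" k] by (auto simp: coprime_iff_gcd_eq_1)
  have I: "is_ideal_OL \<xi> P" using prime_ideal[OF P] .
  have "of_int u * of_nat p + of_int v * of_int k \<in> P"
    using ideal_add[OF I ideal_mult[OF I OL_of_int pP] ideal_mult[OF I OL_of_int kP]] .
  also have "of_int u * of_nat p + of_int v * of_int k = (of_int (u * int p + v * k) :: complex)" by simp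
  finally have "1 \<in> P" using uv by simp
  thus False using prime_ideal_1[OF P] by simp
qed

lemma prime_ideal_prod:
  assumes P: "prime_ideal_OL \<xi> P" and fin: "finite A" and f: "\<And>a. a \<in> A \<Longrightarrow> f a \<in> OL \<xi>"
    and prod: "prod f A \<in> P"
  shows "\<exists>a\<in>A. f a \<in> P"
  using fin f prod
proof (induction A rule: finite_induct)
  case empty thus ?case using prime_ideal_1[OF P] by simp
next
  case (insert a A)
  have "f a * prod f A \<in> P" using insert by simp
  moreover have "prod f A \<in> OL \<xi>" using insert OL_prod by blast
  ultimately have "f a \<in> P \<or> prod f A \<in> P" using prime_ideal_prime[OF P] insert by blast
  thus ?case using insert by blast
qed

section \<open>Existence of primes above p\<close>

definition pO :: "nat \<Rightarrow> complex set" where "pO p = {of_nat p * r | r. r \<in> OL \<xi>}"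

lemma pO_I: "r \<in> OL \<xi> \<Longrightarrow> of_nat p * r \<in> pO p" unfolding pO_def by blast
lemma pO_E: "z \<in> pO p \<Longrightarrow> (\<And>r. r \<in> OL \<xi> \<Longrightarrow> z = of_nat p * r \<Longrightarrow> Q) \<Longrightarrow> Q" unfolding pO_def by blast

lemma pO_ideal: "is_ideal_OL \<xi> (pO p)"
  unfolding is_ideal_OL_def
proof (intro conjI ballI subsetI)
  show "x \<in> OL \<xi>" if "x \<in> pO p" for x using that by (auto elim!: pO_E intro: OL_mult OL_of_nat)
  show "0 \<in> pO p" using pO_I[OF OL_0, of p] by simp
  show "x + y \<in> pO p" if "x \<in> pO p" "y \<in> pO p" for x y
    using that by (auto elim!: pO_E) (metis OL_add distrib_left pO_I)
  show "- x \<in> pO p" if "x \<in> pO p" for x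
    using that by (auto elim!: pO_E) (metis OL_minus minus_mult_right pO_I)
  show "r * x \<in> pO p" if "r \<in> OL \<xi>" "x \<in> pO p" for r x
    using that by (auto elim!: pO_E) (metis OL_mult mult.left_commute pO_I)
qed

lemma pO_p: "of_nat p \<in> pO p" using pO_I[OF OL_1, of p] by simp

lemma pO_1:
  assumes p: "prime p" shows "1 \<notin> pO p"
proof
  assume "1 \<in> pO p"
  then obtain r where r: "r \<in> OL \<xi>" "1 = of_nat p * r" by (elim pO_E)
  have p0: "p \<noteq> 0" using p by auto
  hence "r = of_rat (1 / of_nat p)" using r(2) by (simp add: field_simps of_rat_divide)
  hence "alg_int (of_rat (1 / of_nat p))" using r(1) OL_iff by simp
  hence "1 / of_nat p \<in> (\<int> :: rat set)" by (rule rat_alg_int)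
  then obtain k where k: "1 / of_nat p = (of_int k :: rat)" by (elim Ints_cases)
  hence "of_int k * of_nat p = (1 :: rat)" using p0 by (simp add: field_simps)
  hence "k * int p = 1" by (metis of_int_eq_1_iff of_int_mult of_int_of_nat_eq)
  hence "int p dvd 1" by (metis dvd_triv_right)
  thus False using p by simp
qed

lemma pO_sub: "is_ideal_OL \<xi> I \<Longrightarrow> of_nat p \<in> I \<Longrightarrow> pO p \<subseteq> I"
  by (auto elim!: pO_E intro: ideal_mult')

lemma prime_exists:
  assumes p: "prime p"
  shows "\<exists>P. prime_ideal_OL \<xi> P \<and> of_nat p \<in> P"
proof -
  define A where "A = {I. is_ideal_OL \<xi> I \<and> of_nat p \<in> I \<and> 1 \<notin> I}"
  have pOA: "pO p \<in> A" unfolding A_def using pO_ideal pO_p pO_1[OF p] by blast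
  have "\<forall>C\<in>chains A. \<exists>U\<in>A. \<forall>X\<in>C. X \<subseteq> U"
  proof
    fix C assume C: "C \<in> chains A"
    show "\<exists>U\<in>A. \<forall>X\<in>C. X \<subseteq> U"
    proof (cases "C = {}")
      case True thus ?thesis using pOA by blast
    next
      case False
      have CA: "C \<subseteq> A" using chainsD2[OF C] .
      have ch: "X \<subseteq> Y \<or> Y \<subseteq> X" if "X \<in> C" "Y \<in> C" for X Y using chainsD[OF C that] .
      have idC: "is_ideal_OL \<xi> X" if "X \<in> C" for X using CA that unfolding A_def by blast
      have "\<Union>C \<in> A" unfolding A_def is_ideal_OL_def
      proof (intro CollectI conjI ballI subsetI)
        show "x \<in> OL \<xi>" if "x \<in> \<Union>C" for x using that idC ideal_sub by blast
        show "0 \<in> \<Union>C" using False idC ideal_0 by blast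
        show "x + y \<in> \<Union>C" if "x \<in> \<Union>C" "y \<in> \<Union>C" for x y
        proof -
          from that obtain X Y where XY: "X \<in> C" "Y \<in> C" "x \<in> X" "y \<in> Y" by blast
          show ?thesis
          proof (cases "X \<subseteq> Y")
            case True thus ?thesis using XY idC ideal_add by blast
          next
            case False hence "Y \<subseteq> X" using ch XY by blast
            thus ?thesis using XY idC ideal_add by blast
          qed
        qed
        show "- x \<in> \<Union>C" if "x \<in> \<Union>C" for x using that idC ideal_minus by blast
        show "r * x \<in> \<Union>C" if "r \<in> OL \<xi>" "x \<in> \<Union>C" for r x using that idC ideal_mult by blast
        show "of_nat p \<in> \<Union>C" using False CA unfolding A_def by blast
        show "1 \<notin> \<Union>C" using CA unfolding A_def by blast
      qed
      thus ?thesis by blast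
    qed
  qed
  then obtain M where M: "M \<in> A" and max: "\<forall>X\<in>A. M \<subseteq> X \<longrightarrow> X = M" using Zorn_Lemma2 by blast
  have IM: "is_ideal_OL \<xi> M" and pM: "of_nat p \<in> M" and oneM: "1 \<notin> M" using M unfolding A_def by auto
  have "prime_ideal_OL \<xi> M"
    unfolding prime_ideal_OL_def
  proof (intro conjI ballI impI)
    show "is_ideal_OL \<xi> M" by fact
    show "M \<noteq> OL \<xi>" using oneM OL_1 by blast
    show "M \<noteq> {0}"
    proof
      assume "M = {0}" hence "(of_nat p :: complex) = 0" using pM by blast
      thus False using p by simp
    qed
    fix x y assume x: "x \<in> OL \<xi>" and y: "y \<in> OL \<xi>" and xy: "x * y \<in> M"
    show "x \<in> M \<or> y \<in> M"
    proof (cases "x \<in> M")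
      case True thus ?thesis by blast
    next
      case False hence xM: "x \<notin> M" .
      define M' where "M' = {m + r * x | m r. m \<in> M \<and> r \<in> OL \<xi>}"
      have MM': "M \<subseteq> M'"
      proof
        fix z assume "z \<in> M" thus "z \<in> M'" unfolding M'_def using OL_0 by (intro CollectI exI[of _ z] exI[of _ 0]) simp
      qed
      have xM': "x \<in> M'" unfolding M'_def using ideal_0[OF IM] OL_1 by (intro CollectI exI[of _ 0] exI[of _ 1]) simp
      have IM': "is_ideal_OL \<xi> M'" unfolding is_ideal_OL_def
      proof (intro conjI ballI subsetI)
        show "z \<in> OL \<xi>" if "z \<in> M'" for z
          using that x ideal_sub[OF IM] unfolding M'_def by (auto intro!: OL_add OL_mult)
        show "0 \<in> M'" using MM' ideal_0[OF IM] by blast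
        show "a + b \<in> M'" if "a \<in> M'" "b \<in> M'" for a b
        proof -
          from that obtain m1 r1 m2 r2 where "a = m1 + r1 * x" "b = m2 + r2 * x" "m1 \<in> M" "m2 \<in> M" "r1 \<in> OL \<xi>" "r2 \<in> OL \<xi>"
            unfolding M'_def by blast
          thus ?thesis unfolding M'_def
            by (intro CollectI exI[of _ "m1 + m2"] exI[of _ "r1 + r2"]) (auto simp: algebra_simps intro: ideal_add[OF IM] OL_add)
        qed
        show "- a \<in> M'" if "a \<in> M'" for a
        proof -
          from that obtain m1 r1 where "a = m1 + r1 * x" "m1 \<in> M" "r1 \<in> OL \<xi>" unfolding M'_def by blast
          thus ?thesis unfolding M'_def
            by (intro CollectI exI[of _ "- m1"] exI[of _ "- r1"]) (auto intro: ideal_minus[OF IM] OL_minus)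
        qed
        show "r * a \<in> M'" if "r \<in> OL \<xi>" "a \<in> M'" for r a
        proof -
          from that obtain m1 r1 where "a = m1 + r1 * x" "m1 \<in> M" "r1 \<in> OL \<xi>" unfolding M'_def by blast
          thus ?thesis unfolding M'_def using that(1)
            by (intro CollectI exI[of _ "r * m1"] exI[of _ "r * r1"])
              (simp add: distrib_left mult.assoc ideal_mult[OF IM] OL_mult)
        qed
      qed
      have "1 \<in> M'"
      proof (rule ccontr)
        assume "1 \<notin> M'"
        hence "M' \<in> A" unfolding A_def using IM' MM' pM by blast
        hence "M' = M" using max MM' by blast
        thus False using xM xM' by blast
      qed
      then obtain m r where mr: "1 = m + r * x" "m \<in> M" "r \<in> OL \<xi>" unfolding M'_def by blast
      have "y = m * y + r * (x * y)" using mr(1) by (metis mult_1 distrib_right mult.assoc)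
      also have "\<dots> \<in> M" using ideal_add[OF IM ideal_mult'[OF IM y mr(2)] ideal_mult[OF IM mr(3) xy]] .
      finally show ?thesis by blast
    qed
  qed
  thus ?thesis using pM by blast
qed

end

context gal begin

lemma pO_add: "a \<in> pO p \<Longrightarrow> b \<in> pO p \<Longrightarrow> a + b \<in> pO p" by (rule ideal_add[OF pO_ideal])
lemma pO_diff: "a \<in> pO p \<Longrightarrow> b \<in> pO p \<Longrightarrow> a - b \<in> pO p" by (rule ideal_diff[OF pO_ideal])
lemma pO_minus: "a \<in> pO p \<Longrightarrow> - a \<in> pO p" by (rule ideal_minus[OF pO_ideal])
lemma pO_mult: "r \<in> OL \<xi> \<Longrightarrow> a \<in> pO p \<Longrightarrow> r * a \<in> pO p" by (rule ideal_mult[OF pO_ideal])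

lemma freshman:
  assumes p: "prime p" and x: "x \<in> OL \<xi>" and y: "y \<in> OL \<xi>"
  shows "(x + y) ^ p - x ^ p - y ^ p \<in> pO p"
proof -
  define f where "f k = of_nat (p choose k) * x ^ k * y ^ (p - k)" for k
  have p0: "p \<noteq> 0" using p by auto
  have "(x + y) ^ p = sum f {..p}" unfolding f_def by (rule binomial_ring)
  also have "\<dots> = f 0 + sum f ({..p} - {0})" by (rule sum.remove) auto
  also have "sum f ({..p} - {0}) = f p + sum f ({..p} - {0} - {p})" by (rule sum.remove) (use p0 in auto)
  finally have e: "(x + y) ^ p = f 0 + (f p + sum f ({..p} - {0} - {p}))" .
  have f0: "f 0 = y ^ p" unfolding f_def by simp
  have fp: "f p = x ^ p" unfolding f_def by simp
  have "(x + y) ^ p - x ^ p - y ^ p = sum f ({..p} - {0} - {p})"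
    unfolding e f0 fp by (simp add: algebra_simps)
  also have "\<dots> \<in> pO p"
  proof (rule ideal_sum[OF pO_ideal])
    fix k assume "k \<in> {..p} - {0} - {p}"
    hence k: "k < p" "k \<noteq> 0" by auto
    have "p dvd (p choose k)" by (rule dvd_choose_prime) (use k p0 p in auto)
    then obtain e where e: "p choose k = p * e" by blast
    have "f k = of_nat p * (of_nat e * x ^ k * y ^ (p - k))" unfolding f_def e by simp
    also have "\<dots> \<in> pO p" by (intro pO_I OL_mult OL_of_nat OL_power x y)
    finally show "f k \<in> pO p" .
  qed
  finally show ?thesis .
qed

lemma int_frob_nat:
  assumes p: "prime p"
  shows "(of_nat n :: complex) ^ p - of_nat n \<in> pO p"
proof (induction n)
  case 0 thus ?case using p ideal_0[OF pO_ideal] by (simp add: zero_power prime_gt_0_nat)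
next
  case (Suc n)
  have "(of_nat (Suc n) :: complex) ^ p - of_nat (Suc n) = ((of_nat n + 1) ^ p - of_nat n ^ p - 1 ^ p) + (of_nat n ^ p - of_nat n)"
    by (simp add: algebra_simps)
  also have "\<dots> \<in> pO p" by (intro pO_add freshman p OL_of_nat OL_1 Suc)
  finally show ?case .
qed

lemma int_frob:
  assumes p: "prime p"
  shows "(of_int c :: complex) ^ p - of_int c \<in> pO p"
proof (cases "c \<ge> 0")
  case True thus ?thesis using int_frob_nat[OF p, of "nat c"] by simp
next
  case False
  define n where "n = nat (- c)"
  have c: "(of_int c :: complex) = - of_nat n" unfolding n_def using False by simp
  show ?thesis
  proof (cases "p = 2")
    case True
    have "(of_int c :: complex) ^ p - of_int c = (of_nat n ^ p - of_nat n) + of_nat p * of_nat n"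
      unfolding c True by (simp add: power2_eq_square)
    also have "\<dots> \<in> pO p" by (intro pO_add int_frob_nat p pO_I OL_of_nat)
    finally show ?thesis .
  next
    case False
    hence "p > 2" using prime_ge_2_nat[OF p] by linarith
    hence "odd p" using p prime_odd_nat by blast
    hence "(of_int c :: complex) ^ p - of_int c = - (of_nat n ^ p - of_nat n)"
      unfolding c by simp
    also have "\<dots> \<in> pO p" by (intro pO_minus int_frob_nat p)
    finally show ?thesis .
  qed
qed

lemma poly_frob:
  assumes p: "prime p"
  shows "poly (of_int_poly u) \<xi> ^ p - poly (of_int_poly u) (\<xi> ^ p) \<in> pO p"
proof (induction u)
  case 0 thus ?case using p ideal_0[OF pO_ideal] by (simp add: zero_power prime_gt_0_nat)
next
  case (pCons c u)
  define U where "U = poly (of_int_poly u) \<xi>"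
  define Up where "Up = poly (of_int_poly u) (\<xi> ^ p)"
  have U: "U \<in> OL \<xi>" unfolding U_def by (intro OL_poly_int OL_xi)
  have "poly (of_int_poly (pCons c u)) \<xi> ^ p - poly (of_int_poly (pCons c u)) (\<xi> ^ p)
      = (of_int c + \<xi> * U) ^ p - (of_int c + \<xi> ^ p * Up)"
    unfolding U_def Up_def by (simp add: hom_distribs)
  also have "\<dots> = ((of_int c + \<xi> * U) ^ p - of_int c ^ p - (\<xi> * U) ^ p) + (of_int c ^ p - of_int c)
       + \<xi> ^ p * (U ^ p - Up)"
    by (simp add: algebra_simps power_mult_distrib)
  also have "\<dots> \<in> pO p"
    by (intro pO_add freshman p OL_of_int OL_mult OL_xi U int_frob pO_mult OL_power)
       (use pCons in \<open>simp add: U_def Up_def\<close>)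
  finally show ?case .
qed

lemma poly_cong:
  assumes I: "is_ideal_OL \<xi> I" and a: "a \<in> OL \<xi>" and b: "b \<in> OL \<xi>" and ab: "a - b \<in> I"
  shows "poly (of_int_poly u) a - poly (of_int_poly u) b \<in> I"
proof (induction u)
  case 0 thus ?case using ideal_0[OF I] by simp
next
  case (pCons c u)
  have "poly (of_int_poly (pCons c u)) a - poly (of_int_poly (pCons c u)) b
      = (a - b) * poly (of_int_poly u) a + b * (poly (of_int_poly u) a - poly (of_int_poly u) b)"
    by (simp add: hom_distribs algebra_simps)
  also have "\<dots> \<in> I"
    by (intro ideal_add[OF I] ideal_mult'[OF I] ideal_mult[OF I] OL_poly_int a b ab pCons)
  finally show ?case .
qed

lemma frob_exists:
  assumes p: "prime p" and nd: "\<not> int p dvd Dq" and P: "prime_ideal_OL \<xi> P" and pP: "of_nat p \<in> P"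
  shows "\<exists>\<sigma>\<in>G. \<forall>x\<in>OL \<xi>. \<sigma> x - x ^ p \<in> P"
proof -
  have I: "is_ideal_OL \<xi> P" using prime_ideal[OF P] .
  have sub: "pO p \<subseteq> P" using pO_sub[OF I pP] .
  have "poly Fq \<xi> ^ p - poly Fq (\<xi> ^ p) \<in> pO p" using poly_frob[OF p, of F] .
  hence "- poly Fq (\<xi> ^ p) \<in> pO p" using root p by (simp add: zero_power prime_gt_0_nat)
  hence "poly Fq (\<xi> ^ p) \<in> P" using pO_minus sub by fastforce
  also have "poly Fq (\<xi> ^ p) = (\<Prod>\<sigma>\<in>G. \<xi> ^ p - \<sigma> \<xi>)"
    by (subst Fq_prod) (simp add: poly_prod)
  finally have prodP: "(\<Prod>\<sigma>\<in>G. \<xi> ^ p - \<sigma> \<xi>) \<in> P" .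
  have "\<exists>\<sigma>\<in>G. \<xi> ^ p - \<sigma> \<xi> \<in> P"
    by (rule prime_ideal_prod[OF P finite_G _ prodP]) (rule OL_diff[OF OL_power[OF OL_xi] OL_aut[OF _ OL_xi]])
  then obtain \<sigma> where s: "\<sigma> \<in> G" and sP: "\<xi> ^ p - \<sigma> \<xi> \<in> P" by blast
  interpret s: aut \<xi> \<sigma> by (rule aut.intro, fact)
  have "\<forall>x\<in>OL \<xi>. \<sigma> x - x ^ p \<in> P"
  proof
    fix x assume x: "x \<in> OL \<xi>"
    have xL: "x \<in> QL \<xi>" using x OL_iff by blast
    obtain U where U: "of_int Dq * x = poly (of_int_poly U) \<xi>" using index_bound[OF x] by blast
    have "\<sigma> (of_int Dq * x) = of_int Dq * \<sigma> x" using s.mult[OF QL_of_int xL] s.of_int by simp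
    hence sU: "of_int Dq * \<sigma> x = poly (of_int_poly U) (\<sigma> \<xi>)" using U s.poly_int[OF QL_xi] by simp
    have sx: "\<sigma> x \<in> OL \<xi>" using OL_aut[OF s x] .
    have A1: "poly (of_int_poly U) (\<sigma> \<xi>) - poly (of_int_poly U) (\<xi> ^ p) \<in> P"
      by (rule poly_cong[OF I]) (use OL_aut[OF s OL_xi] OL_power[OF OL_xi] ideal_minus[OF I sP] in auto)
    have A2: "poly (of_int_poly U) (\<xi> ^ p) - poly (of_int_poly U) \<xi> ^ p \<in> P"
      using pO_minus[OF poly_frob[OF p, of U]] sub by auto
    have A3: "((of_int Dq) ^ p - of_int Dq) * x ^ p \<in> P"
      using ideal_mult'[OF pO_ideal OL_power[OF x] int_frob[OF p, of Dq]] sub by auto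
    have "of_int Dq * (\<sigma> x - x ^ p) =
        (poly (of_int_poly U) (\<sigma> \<xi>) - poly (of_int_poly U) (\<xi> ^ p))
      + (poly (of_int_poly U) (\<xi> ^ p) - poly (of_int_poly U) \<xi> ^ p)
      + ((of_int Dq) ^ p - of_int Dq) * x ^ p"
      unfolding sU[symmetric] U[symmetric] by (simp add: algebra_simps power_mult_distrib)
    also have "\<dots> \<in> P" by (intro ideal_add[OF I] A1 A2 A3)
    finally have "of_int Dq * (\<sigma> x - x ^ p) \<in> P" .
    hence "of_int Dq \<in> P \<or> \<sigma> x - x ^ p \<in> P"
      by (intro prime_ideal_prime[OF P] OL_of_int OL_diff sx OL_power x)
    moreover have "of_int Dq \<notin> P" using prime_ideal_int[OF P p pP] nd by blast
    ultimately show "\<sigma> x - x ^ p \<in> P" by blast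
  qed
  thus ?thesis using s by blast
qed

end

lemma rat_poly_clear: fixes q :: "rat poly" shows "\<exists>N::int. N > 0 \<and> (\<exists>A::int poly. of_int_poly A = Polynomial.smult (of_int N) q)"
proof (induction q)
  case 0 thus ?case by (intro exI[of _ 1]) (auto intro: exI[of _ 0])
next
  case (pCons c q)
  from pCons obtain N A where N: "N > 0" "of_int_poly A = Polynomial.smult (of_int N) q" by blast
  obtain a b where ab: "quotient_of c = (a, b)" by (cases "quotient_of c")
  have b: "b > 0" using quotient_of_denom_pos[OF ab] .
  have c: "c = of_int a / of_int b" using quotient_of_div[OF ab] .
  define A' where "A' = pCons (a * N) (Polynomial.smult b A)"
  have "of_int_poly A' = Polynomial.smult (of_int (N * b)) (pCons c q)"
    unfolding A'_def using N(2) b c by (simp add: hom_distribs field_simps)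
  moreover have "N * b > 0" using N b by simp
  ultimately show ?case by blast
qed

context gal begin

lemma irreducible_Fr: "irreducible (of_int_poly F :: rat poly)"
proof (rule irreducibleI)
  define Fr where "Fr = (of_int_poly F :: rat poly)"
  have dFr: "degree Fr = d" unfolding Fr_def by (simp add: degree_map_poly)
  show "Fr \<noteq> 0" using dFr d_pos by auto
  thus "\<not> is_unit Fr" using dFr d_pos is_unit_iff_degree by auto
  fix a b assume ab: "Fr = a * b"
  show "is_unit a \<or> is_unit b"
  proof (rule ccontr)
    assume nu: "\<not> (is_unit a \<or> is_unit b)"
    have a0: "a \<noteq> 0" and b0: "b \<noteq> 0" using ab \<open>Fr \<noteq> 0\<close> by auto
    have da: "degree a > 0" using nu a0 is_unit_iff_degree by blast
    have db: "degree b > 0" using nu b0 is_unit_iff_degree by blast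
    have dab: "degree a + degree b = d" using ab dFr degree_mult_eq[OF a0 b0] by simp
    have "poly (rp Fr) \<xi> = 0" unfolding Fr_def rp_of_int using root .
    hence "poly (rp a) \<xi> = 0 \<or> poly (rp b) \<xi> = 0" unfolding ab rp_mult by simp
    then obtain c where c: "c = a \<or> c = b" "poly (rp c) \<xi> = 0" by blast
    have dc: "degree (rp c) < d" using c(1) da db dab by (auto simp: degree_map_poly)
    have "\<forall>\<sigma>\<in>G. poly (rp c) (\<sigma> \<xi>) = 0"
    proof
      fix \<sigma> assume s: "\<sigma> \<in> G"
      interpret aut \<xi> \<sigma> by (rule aut.intro, fact)
      show "poly (rp c) (\<sigma> \<xi>) = 0" using poly[OF QL_xi, of c] c(2) zero by simp
    qed
    hence "rp c = 0" using poly_vanish dc by blast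
    hence "c = 0" by simp
    thus False using c(1) a0 b0 by blast
  qed
qed

lemma E_exists: "\<exists>E::int. E \<noteq> 0 \<and> (\<exists>B::int poly. of_int E = poly (of_int_poly B) \<xi> * poly (of_int_poly (pderiv F)) \<xi>)"
proof -
  define Fr where "Fr = (of_int_poly F :: rat poly)"
  have dFr: "degree Fr = d" unfolding Fr_def by (simp add: degree_map_poly)
  have pe: "prime_elem Fr" using irreducible_Fr unfolding Fr_def by (rule irreducible_imp_prime_elem)
  have "\<not> Fr dvd pderiv Fr"
  proof
    assume dv: "Fr dvd pderiv Fr"
    have "pderiv Fr \<noteq> 0" using dFr d_pos by (simp add: pderiv_eq_0_iff)
    hence "degree Fr \<le> degree (pderiv Fr)" using dvd_imp_degree_le[OF dv] by simp
    thus False using dFr d_pos by (simp add: degree_pderiv)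
  qed
  hence "coprime Fr (pderiv Fr)" using prime_elem_imp_coprime[OF pe] by blast
  hence "gcd Fr (pderiv Fr) = 1" by simp
  then obtain a b where ab: "a * Fr + b * pderiv Fr = 1"
    using bezout_coefficients_fst_snd[of Fr "pderiv Fr"] by metis
  obtain N B where N: "N > 0" "of_int_poly B = Polynomial.smult (of_int N) b" using rat_poly_clear by blast
  have "poly (rp (a * Fr + b * pderiv Fr)) \<xi> = 1" using ab by simp
  moreover have "rp Fr = Fq" unfolding Fr_def by (rule rp_of_int)
  moreover have "rp (pderiv Fr) = of_int_poly (pderiv F)" unfolding Fr_def
    by (simp add: hom_distribs rp_of_int[symmetric])
  ultimately have "poly (rp b) \<xi> * poly (of_int_poly (pderiv F)) \<xi> = 1"
    using root by (simp add: rp_add rp_mult)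
  hence "of_int N = poly (rp (Polynomial.smult (of_int N) b)) \<xi> * poly (of_int_poly (pderiv F)) \<xi>"
    by (simp add: hom_distribs)
  also have "rp (Polynomial.smult (of_int N) b) = of_int_poly B" unfolding N(2)[symmetric] by (rule rp_of_int)
  finally show ?thesis using N(1) by (intro exI[of _ N]) auto
qed

definition Eint :: int where "Eint = (SOME E. E \<noteq> 0 \<and> (\<exists>B::int poly. of_int E = poly (of_int_poly B) \<xi> * poly (of_int_poly (pderiv F)) \<xi>))"

lemma Eint: "Eint \<noteq> 0" "\<exists>B::int poly. of_int Eint = poly (of_int_poly B) \<xi> * poly (of_int_poly (pderiv F)) \<xi>"
  using someI_ex[OF E_exists] unfolding Eint_def by blast+

end

locale gal_P = gal +
  fixes P :: "complex set" and p :: nat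
  assumes P: "prime_ideal_OL \<xi> P" and p: "prime p" and pP: "of_nat p \<in> P"
begin

abbreviation ev :: "int poly \<Rightarrow> complex" where "ev u \<equiv> poly (of_int_poly u) \<xi>"

lemma I: "is_ideal_OL \<xi> P" using prime_ideal[OF P] .

lemma ev_OL: "ev u \<in> OL \<xi>" by (intro OL_poly_int OL_xi)

lemma ev_mult: "ev u \<in> P \<Longrightarrow> ev (u * v) \<in> P"
  using ideal_mult'[OF I ev_OL] by (simp add: hom_distribs)

lemma ev_add: "ev u \<in> P \<Longrightarrow> ev v \<in> P \<Longrightarrow> ev (u + v) \<in> P"
  using ideal_add[OF I] by (simp add: hom_distribs)

lemma ev_diff: "ev u \<in> P \<Longrightarrow> ev v \<in> P \<Longrightarrow> ev (u - v) \<in> P"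
  using ideal_diff[OF I] by (simp add: hom_distribs)

lemma ev_smult_p: "ev (Polynomial.smult (int p) v) \<in> P"
proof -
  have "ev (Polynomial.smult (int p) v) = of_nat p * ev v" by (simp add: hom_distribs)
  thus ?thesis using ideal_mult'[OF I ev_OL pP] by (simp add: mult.commute)
qed

lemma ev_smult: "ev u \<in> P \<Longrightarrow> ev (Polynomial.smult c u) \<in> P"
proof -
  assume "ev u \<in> P"
  moreover have "ev (Polynomial.smult c u) = of_int c * ev u" by (simp add: hom_distribs)
  ultimately show ?thesis using ideal_mult[OF I OL_of_int] by simp
qed

lemma F_I: "ev F \<in> P" using root ideal_0[OF I] by simp

lemma reduce:
  assumes r: "ev r \<in> P" and nd: "\<exists>i. \<not> int p dvd coeff r i"
  shows "\<exists>h. ev h \<in> P \<and> lead_coeff h = 1 \<and> degree h \<le> degree r"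
proof -
  define J where "J = {i. \<not> int p dvd coeff r i}"
  have J: "J \<subseteq> {..degree r}" unfolding J_def by (auto intro: le_degree)
  hence fJ: "finite J" using finite_subset by blast
  have Jne: "J \<noteq> {}" using nd unfolding J_def by blast
  define j where "j = Max J"
  have jJ: "j \<in> J" unfolding j_def using fJ Jne by simp
  have jmax: "i > j \<Longrightarrow> int p dvd coeff r i" for i using Max_ge[OF fJ, of i] unfolding j_def J_def by force
  have jdeg: "j \<le> degree r" using J jJ by auto
  define c where "c = coeff r j"
  have c: "\<not> int p dvd c" using jJ unfolding c_def J_def by simp
  define rh where "rh = (\<Sum>i\<in>{j<..degree r}. monom (coeff r i) i)"
  have crh: "coeff rh i = (if j < i then coeff r i else 0)" for i
    unfolding rh_def coeff_sum by (auto simp: coeff_monom coeff_eq_0 intro: le_degree)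
  have rh_p: "rh = Polynomial.smult (int p) (map_poly (\<lambda>x. x div int p) rh)"
    by (rule poly_eqI) (auto simp: coeff_map_poly crh jmax)
  define r1 where "r1 = r - rh"
  have cr1: "coeff r1 i = (if i \<le> j then coeff r i else 0)" for i
    unfolding r1_def by (simp add: crh)
  have r1I: "ev r1 \<in> P" unfolding r1_def using ev_diff[OF r] rh_p ev_smult_p by metis
  have cop: "coprime (int p) c" using c p prime_imp_coprime[of "int p" c] by simp
  obtain u v where uv: "u * int p + v * c = gcd (int p) c" using bezout_int by blast
  have g1: "gcd (int p) c = 1" using cop by (simp add: coprime_iff_gcd_eq_1)
  define c' where "c' = v"
  define t where "t = - u"
  have ct: "c' * c - int p * t = 1" unfolding c'_def t_def using uv g1 by (simp add: mult.commute)
  define h where "h = Polynomial.smult c' r1 - Polynomial.smult (int p) (monom t j)"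
  have ch: "coeff h i = (if i < j then c' * coeff r i else if i = j then 1 else 0)" for i
    unfolding h_def using ct by (simp add: cr1 coeff_monom c_def)
  have hI: "ev h \<in> P" unfolding h_def using ev_diff[OF ev_smult[OF r1I] ev_smult_p] .
  have dh: "degree h = j"
  proof (rule antisym)
    show "degree h \<le> j" by (rule degree_le) (auto simp: ch)
    show "j \<le> degree h" by (rule le_degree) (simp add: ch)
  qed
  have "lead_coeff h = 1" using dh ch by simp
  thus ?thesis using hI dh jdeg by blast
qed

definition gmin :: "int poly" where
  "gmin = (SOME g. ev g \<in> P \<and> lead_coeff g = 1 \<and> (\<forall>h. ev h \<in> P \<and> lead_coeff h = 1 \<longrightarrow> degree g \<le> degree h))"

lemma gmin_ex: "\<exists>g. ev g \<in> P \<and> lead_coeff g = 1 \<and> (\<forall>h. ev h \<in> P \<and> lead_coeff h = 1 \<longrightarrow> degree g \<le> degree h)"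
proof -
  define m where "m = (LEAST m. \<exists>h. ev h \<in> P \<and> lead_coeff h = 1 \<and> degree h = m)"
  have ex: "\<exists>m h. ev h \<in> P \<and> lead_coeff h = 1 \<and> degree h = m" using F_I monic by blast
  obtain g where g: "ev g \<in> P" "lead_coeff g = 1" "degree g = m"
    using LeastI_ex[OF ex] unfolding m_def by blast
  have "degree g \<le> degree h" if "ev h \<in> P" "lead_coeff h = 1" for h
  proof -
    have "m \<le> degree h" unfolding m_def by (rule Least_le) (use that in blast)
    thus ?thesis using g(3) by simp
  qed
  thus ?thesis using g by blast
qed

lemma gmin: "ev gmin \<in> P" "lead_coeff gmin = 1" "\<And>h. ev h \<in> P \<Longrightarrow> lead_coeff h = 1 \<Longrightarrow> degree gmin \<le> degree h"
  using someI_ex[OF gmin_ex] unfolding gmin_def by blast+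

lemma I_char: "ev u \<in> P \<Longrightarrow> \<exists>q s. u = gmin * q + Polynomial.smult (int p) s"
proof -
  assume u: "ev u \<in> P"
  have g0: "gmin \<noteq> 0" using gmin(2) by auto
  obtain q r where qr: "pseudo_divmod u gmin = (q, r)" by (cases "pseudo_divmod u gmin")
  have e: "u = gmin * q + r" using pseudo_divmod(1)[OF g0 qr] gmin(2) by simp
  have dr: "r = 0 \<or> degree r < degree gmin" using pseudo_divmod(2)[OF g0 qr] .
  have rI: "ev r \<in> P"
  proof -
    have "r = u - gmin * q" using e by simp
    thus ?thesis using ev_diff[OF u ev_mult[OF gmin(1)]] by simp
  qed
  have all: "\<forall>i. int p dvd coeff r i"
  proof (rule ccontr)
    assume "\<not> (\<forall>i. int p dvd coeff r i)"
    then obtain h where h: "ev h \<in> P" "lead_coeff h = 1" "degree h \<le> degree r" using reduce[OF rI] by blast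
    have "r \<noteq> 0" using \<open>\<not> (\<forall>i. _)\<close> by auto
    hence "degree r < degree gmin" using dr by simp
    thus False using gmin(3)[OF h(1,2)] h(3) by simp
  qed
  have "r = Polynomial.smult (int p) (map_poly (\<lambda>x. x div int p) r)"
    by (rule poly_eqI) (use all in \<open>auto simp: coeff_map_poly\<close>)
  hence "u = gmin * q + Polynomial.smult (int p) (map_poly (\<lambda>x. x div int p) r)" using e by simp
  thus ?thesis by blast
qed

lemma gmin_deg: "degree gmin > 0"
proof (rule ccontr)
  assume "\<not> degree gmin > 0"
  hence "gmin = 1" using gmin(2) by (metis degree_0_id gr0I one_poly_eq_simps(1))
  hence "1 \<in> P" using gmin(1) by simp
  thus False using prime_ideal_1[OF P] by simp
qed

lemma unramified_at:
  assumes nD: "\<not> int p dvd Dq" and nE: "\<not> int p dvd Eint"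
  shows "of_nat p \<notin> ideal_prod_OL P P"
proof
  assume "of_nat p \<in> ideal_prod_OL P P"
  hence "\<exists>(n::nat) f g. of_nat p = (\<Sum>i<n. f i * g i) \<and> (\<forall>i<n. f i \<in> P \<and> g i \<in> P)"
    unfolding ideal_prod_OL_def by (rule CollectD)
  then obtain n :: nat and f g where pfg: "of_nat p = (\<Sum>i<n. f i * g i)" and fg: "\<And>i. i < n \<Longrightarrow> f i \<in> P \<and> g i \<in> P"
    by blast
  define G0 where "G0 = ev gmin"
  have G0: "G0 \<in> P" unfolding G0_def using gmin(1) .
  obtain k s0 where ks: "F = gmin * k + Polynomial.smult (int p) s0" using I_char[OF F_I] by blast
  define K where "K = ev k"
  define S0 where "S0 = ev s0"
  have KG: "K * G0 = - (of_nat p * S0)"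
    using arg_cong[OF ks, of ev] root unfolding K_def S0_def G0_def by (simp add: hom_distribs algebra_simps eq_neg_iff_add_eq_0)
  have kI: "K \<notin> P"
  proof
    assume "K \<in> P"
    then obtain q s where qs: "k = gmin * q + Polynomial.smult (int p) s" using I_char K_def by blast
    have Fe: "F = gmin * (gmin * q) + Polynomial.smult (int p) (gmin * s + s0)"
      using ks qs by (simp add: algebra_simps smult_add_right)
    have "pderiv F = gmin * (pderiv gmin * q + pderiv (gmin * q)) + Polynomial.smult (int p) (pderiv (gmin * s + s0))"
      unfolding Fe by (simp add: pderiv_add pderiv_mult pderiv_smult algebra_simps)
    hence "ev (pderiv F) = G0 * ev (pderiv gmin * q + pderiv (gmin * q)) + of_nat p * ev (pderiv (gmin * s + s0))"
      unfolding G0_def by (simp add: hom_distribs)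
    also have "\<dots> \<in> P" by (rule ideal_add[OF I ideal_mult'[OF I ev_OL G0] ideal_mult'[OF I ev_OL pP]])
    finally have dP: "ev (pderiv F) \<in> P" .
    obtain B where B: "of_int Eint = ev B * ev (pderiv F)" using Eint(2) by blast
    have "of_int Eint \<in> P" unfolding B by (rule ideal_mult[OF I ev_OL dP])
    hence "int p dvd Eint" using prime_ideal_int[OF P p pP] by blast
    thus False using nE by simp
  qed
  have "\<forall>i. i < n \<longrightarrow> (\<exists>a b. a \<in> OL \<xi> \<and> b \<in> OL \<xi> \<and> of_int Dq * f i = G0 * a + of_nat p * b)"
  proof (intro allI impI)
    fix i assume i: "i < n"
    have fO: "f i \<in> OL \<xi>" using fg[OF i] ideal_sub[OF I] by blast
    obtain u where u: "of_int Dq * f i = ev u" using index_bound[OF fO] by blast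
    have "ev u \<in> P" unfolding u[symmetric] using ideal_mult[OF I OL_of_int] fg[OF i] by blast
    then obtain q s where "u = gmin * q + Polynomial.smult (int p) s" using I_char by blast
    hence "of_int Dq * f i = G0 * ev q + of_nat p * ev s" unfolding u G0_def by (simp add: hom_distribs)
    thus "\<exists>a b. a \<in> OL \<xi> \<and> b \<in> OL \<xi> \<and> of_int Dq * f i = G0 * a + of_nat p * b" using ev_OL by blast
  qed
  then obtain a b where ab: "\<And>i. i < n \<Longrightarrow> a i \<in> OL \<xi> \<and> b i \<in> OL \<xi> \<and> of_int Dq * f i = G0 * a i + of_nat p * b i"
    by metis
  have "\<forall>i. i < n \<longrightarrow> (\<exists>a b. a \<in> OL \<xi> \<and> b \<in> OL \<xi> \<and> of_int Dq * g i = G0 * a + of_nat p * b)"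
  proof (intro allI impI)
    fix i assume i: "i < n"
    have fO: "g i \<in> OL \<xi>" using fg[OF i] ideal_sub[OF I] by blast
    obtain u where u: "of_int Dq * g i = ev u" using index_bound[OF fO] by blast
    have "ev u \<in> P" unfolding u[symmetric] using ideal_mult[OF I OL_of_int] fg[OF i] by blast
    then obtain q s where "u = gmin * q + Polynomial.smult (int p) s" using I_char by blast
    hence "of_int Dq * g i = G0 * ev q + of_nat p * ev s" unfolding u G0_def by (simp add: hom_distribs)
    thus "\<exists>a b. a \<in> OL \<xi> \<and> b \<in> OL \<xi> \<and> of_int Dq * g i = G0 * a + of_nat p * b" using ev_OL by blast
  qed
  then obtain c e where ce: "\<And>i. i < n \<Longrightarrow> c i \<in> OL \<xi> \<and> e i \<in> OL \<xi> \<and> of_int Dq * g i = G0 * c i + of_nat p * e i"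
    by metis
  define W where "W = (\<Sum>i<n. (K * b i - S0 * a i) * (K * e i - S0 * c i))"
  have KO': "K \<in> OL \<xi>" unfolding K_def by (rule ev_OL)
  have SO': "S0 \<in> OL \<xi>" unfolding S0_def by (rule ev_OL)
  have WO: "W \<in> OL \<xi>" unfolding W_def
  proof (rule OL_sum)
    fix i assume "i \<in> {..<n}" hence i: "i < n" by simp
    show "(K * b i - S0 * a i) * (K * e i - S0 * c i) \<in> OL \<xi>"
      using ab[OF i] ce[OF i] KO' SO' by (intro OL_mult OL_diff) auto
  qed
  have "(of_int Dq * K) ^ 2 * of_nat p = (\<Sum>i<n. (K * (of_int Dq * f i)) * (K * (of_int Dq * g i)))"
    unfolding pfg sum_distrib_left by (rule sum.cong) (simp_all add: power2_eq_square mult_ac)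
  also have "\<dots> = (\<Sum>i<n. (K * (G0 * a i + of_nat p * b i)) * (K * (G0 * c i + of_nat p * e i)))"
    by (rule sum.cong) (use ab ce in auto)
  also have "\<dots> = (\<Sum>i<n. of_nat p * (of_nat p * ((K * b i - S0 * a i) * (K * e i - S0 * c i))))"
  proof (rule sum.cong)
    fix i
    have "K * (G0 * a i + of_nat p * b i) = (K * G0) * a i + of_nat p * (K * b i)" by (simp add: algebra_simps)
    also have "\<dots> = of_nat p * (K * b i - S0 * a i)" unfolding KG by (simp add: algebra_simps)
    finally have 1: "K * (G0 * a i + of_nat p * b i) = of_nat p * (K * b i - S0 * a i)" .
    have "K * (G0 * c i + of_nat p * e i) = (K * G0) * c i + of_nat p * (K * e i)" by (simp add: algebra_simps)
    also have "\<dots> = of_nat p * (K * e i - S0 * c i)" unfolding KG by (simp add: algebra_simps)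
    finally have 2: "K * (G0 * c i + of_nat p * e i) = of_nat p * (K * e i - S0 * c i)" .
    show "(K * (G0 * a i + of_nat p * b i)) * (K * (G0 * c i + of_nat p * e i)) =
        of_nat p * (of_nat p * ((K * b i - S0 * a i) * (K * e i - S0 * c i)))" unfolding 1 2 by (simp only: mult_ac)
  qed simp
  also have "\<dots> = of_nat p * (of_nat p * W)" unfolding W_def by (simp only: sum_distrib_left)
  finally have eq: "(of_int Dq * K) ^ 2 * of_nat p = of_nat p * (of_nat p * W)" .
  have p0: "(of_nat p :: complex) \<noteq> 0" using p by auto
  have "(of_int Dq * K) ^ 2 = of_nat p * W" using eq p0 by (simp add: mult.commute[of _ "of_nat p"])
  hence "(of_int Dq * K) * (of_int Dq * K) \<in> P"
    using ideal_mult'[OF I WO pP] by (simp add: power2_eq_square)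
  moreover have KO: "K \<in> OL \<xi>" unfolding K_def by (rule ev_OL)
  moreover have DKO: "of_int Dq * K \<in> OL \<xi>" by (rule OL_mult[OF OL_of_int KO])
  ultimately have "of_int Dq * K \<in> P" using prime_ideal_prime[OF P DKO DKO] by blast
  hence "of_int Dq \<in> P \<or> K \<in> P" using prime_ideal_prime[OF P OL_of_int KO] by blast
  moreover have "of_int Dq \<notin> P" using prime_ideal_int[OF P p pP] nD by blast
  ultimately show False using kI by blast
qed

end

lemma rat_frac_helper:
  fixes m n :: int
  assumes p: "prime p" and n: "n \<noteq> 0" and nd: "\<not> int p dvd n"
  shows "p_integral p (of_int m / of_int n)"
    and "int p dvd m \<Longrightarrow> int p dvd fst (quotient_of (of_int m / of_int n))"
proof -
  obtain a b where ab: "quotient_of (of_int m / of_int n) = (a, b)" by (cases "quotient_of (of_int m / of_int n)")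
  have b: "b > 0" using quotient_of_denom_pos[OF ab] .
  have r: "(of_int m / of_int n :: rat) = of_int a / of_int b" using quotient_of_div[OF ab] .
  have cop: "coprime a b" using quotient_of_coprime[OF ab] .
  have e: "m * b = a * n" using r n b by (simp add: field_simps) (metis of_int_eq_iff of_int_mult)
  have "b dvd a * n" using e by (metis dvd_triv_right)
  hence bn: "b dvd n" using cop by (simp add: coprime_dvd_mult_right_iff coprime_commute)
  show "p_integral p (of_int m / of_int n)" unfolding p_integral_def ab
    using bn nd dvd_trans by auto
  assume "int p dvd m"
  hence "int p dvd a * n" using e by (metis dvd_mult2)
  moreover have "prime (int p)" using p by simp
  ultimately have "int p dvd a" using nd prime_dvd_mult_iff by blast
  thus "int p dvd fst (quotient_of (of_int m / of_int n))" using ab by simp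
qed

context gal begin

lemma inv_comp_apply:
  assumes h: "h \<in> G" and h0: "h0 \<in> G"
  shows "inv (h \<circ> inv h0) x = h0 (inv h x)"
proof -
  interpret h: aut \<xi> h by (rule aut.intro, fact)
  interpret h0: aut \<xi> h0 by (rule aut.intro, fact)
  have t: "h \<circ> inv h0 \<in> G" using aut_comp[OF h h0.inv_aut] .
  interpret t: aut \<xi> "h \<circ> inv h0" by (rule aut.intro, fact)
  have "(h \<circ> inv h0) (h0 (inv h x)) = x" by (simp add: h0.inv_apply h.apply_inv)
  hence "inv (h \<circ> inv h0) ((h \<circ> inv h0) (h0 (inv h x))) = inv (h \<circ> inv h0) x" by simp
  thus ?thesis using t.inv_apply by simp
qed

lemma frob_conj:
  assumes s: "\<sigma> \<in> frob_class \<xi> p" and t: "\<tau> \<in> G"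
  shows "\<tau> \<circ> \<sigma> \<circ> inv \<tau> \<in> frob_class \<xi> p"
proof -
  from s obtain P where sG: "\<sigma> \<in> G" and P: "prime_ideal_OL \<xi> P" and pP: "of_nat p \<in> P"
    and fr: "\<forall>x\<in>OL \<xi>. \<sigma> x - x ^ p \<in> P" unfolding frob_class_def by blast
  interpret t: aut \<xi> \<tau> by (rule aut.intro, fact)
  interpret s: aut \<xi> \<sigma> by (rule aut.intro, fact)
  have tiG: "inv \<tau> \<in> G" using t.inv_aut .
  interpret ti: aut \<xi> "inv \<tau>" by (rule aut.intro, fact)
  have I: "is_ideal_OL \<xi> P" using prime_ideal[OF P] .
  have PO: "x \<in> P \<Longrightarrow> x \<in> OL \<xi>" for x using ideal_sub[OF I] .
  have PL: "x \<in> P \<Longrightarrow> x \<in> QL \<xi>" for x using PO OL_iff by blast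
  define P' where "P' = \<tau> ` P"
  have inP': "x \<in> P' \<longleftrightarrow> inv \<tau> x \<in> P" for x
    unfolding P'_def using t.inv_apply t.apply_inv by (metis image_iff)
  have I': "is_ideal_OL \<xi> P'" unfolding is_ideal_OL_def
  proof (intro conjI ballI subsetI)
    show "x \<in> OL \<xi>" if "x \<in> P'" for x using that OL_aut[OF t PO] unfolding P'_def by blast
    show "0 \<in> P'" using inP' ti.zero ideal_0[OF I] by simp
    show "x + y \<in> P'" if "x \<in> P'" "y \<in> P'" for x y
      using that ti.add[OF PL[of "\<tau> _"]] unfolding inP'
      by (metis I PL ideal_add t.QL_iff t.apply_inv ti.add)
    show "- x \<in> P'" if "x \<in> P'" for x
      using that unfolding inP' by (metis I PL ideal_minus t.QL_iff t.apply_inv ti.minus)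
    show "r * x \<in> P'" if "r \<in> OL \<xi>" "x \<in> P'" for r x
    proof -
      have rL: "r \<in> QL \<xi>" using that(1) OL_iff by blast
      have xL: "x \<in> QL \<xi>" using that(2) unfolding inP' by (metis PL t.QL_iff t.apply_inv)
      have "inv \<tau> (r * x) = inv \<tau> r * inv \<tau> x" using ti.mult[OF rL xL] .
      also have "\<dots> \<in> P" using ideal_mult[OF I OL_aut[OF tiG that(1)]] that(2) unfolding inP' by blast
      finally show ?thesis unfolding inP' .
    qed
  qed
  have "prime_ideal_OL \<xi> P'" unfolding prime_ideal_OL_def
  proof (intro conjI ballI impI)
    show "is_ideal_OL \<xi> P'" by fact
    show "P' \<noteq> OL \<xi>"
    proof
      assume "P' = OL \<xi>" hence "1 \<in> P'" using OL_1 by blast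
      hence "1 \<in> P" unfolding inP' using ti.one by simp
      thus False using prime_ideal_1[OF P] by simp
    qed
    show "P' \<noteq> {0}"
    proof
      assume "P' = {0}"
      moreover have "of_nat p \<in> P'" unfolding inP' using ti.of_nat pP by simp
      ultimately have "(of_nat p :: complex) = 0" by blast
      hence "p = 0" by simp
      hence "(0::complex) \<in> P \<and> P = P" by (simp add: ideal_0[OF I])
      have "P \<noteq> {0}" using P unfolding prime_ideal_OL_def by blast
      moreover have "P \<subseteq> {0}"
      proof
        fix x assume x: "x \<in> P"
        have "\<tau> x \<in> P'" unfolding inP' using x t.inv_apply by simp
        thus "x \<in> {0}" using \<open>P' = {0}\<close> t.zero t.inj by (metis injD singletonD singletonI)
      qed
      ultimately show False using ideal_0[OF I] by blast
    qed
    fix x y assume x: "x \<in> OL \<xi>" and y: "y \<in> OL \<xi>" and xy: "x * y \<in> P'"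
    have xL: "x \<in> QL \<xi>" and yL: "y \<in> QL \<xi>" using x y OL_iff by auto
    have "inv \<tau> x * inv \<tau> y \<in> P" using xy ti.mult[OF xL yL] unfolding inP' by simp
    hence "inv \<tau> x \<in> P \<or> inv \<tau> y \<in> P" using prime_ideal_prime[OF P OL_aut[OF tiG x] OL_aut[OF tiG y]] by blast
    thus "x \<in> P' \<or> y \<in> P'" unfolding inP' .
  qed
  moreover have "of_nat p \<in> P'" unfolding inP' using ti.of_nat pP by simp
  moreover have "\<forall>x\<in>OL \<xi>. (\<tau> \<circ> \<sigma> \<circ> inv \<tau>) x - x ^ p \<in> P'"
  proof
    fix x assume x: "x \<in> OL \<xi>"
    define y where "y = inv \<tau> x"
    have y: "y \<in> OL \<xi>" unfolding y_def using OL_aut[OF tiG x] .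
    have yL: "y \<in> QL \<xi>" using y OL_iff by blast
    have xy: "x = \<tau> y" unfolding y_def using t.apply_inv by simp
    have "(\<tau> \<circ> \<sigma> \<circ> inv \<tau>) x - x ^ p = \<tau> (\<sigma> y) - \<tau> (y ^ p)"
      unfolding xy using t.power[OF yL] t.inv_apply by simp
    also have "\<dots> = \<tau> (\<sigma> y - y ^ p)" using t.diff[OF s.QL[OF yL] QL_power[OF yL]] by simp
    finally show "(\<tau> \<circ> \<sigma> \<circ> inv \<tau>) x - x ^ p \<in> P'"
      unfolding inP' using t.inv_apply fr y by simp
  qed
  moreover have "\<tau> \<circ> \<sigma> \<circ> inv \<tau> \<in> G" using aut_comp[OF aut_comp[OF t sG] tiG] .
  ultimately show ?thesis unfolding frob_class_def by blast
qed

lemma frob_vs_class: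
  assumes K: "conj_class G K" and ne: "frob_class \<xi> p \<noteq> {}" and sub: "frob_class \<xi> p \<subseteq> K"
  shows "frob_class \<xi> p = K"
proof
  show "frob_class \<xi> p \<subseteq> K" by fact
  from K obtain g where g: "g \<in> G" and Kd: "K = {h \<circ> g \<circ> inv h | h. h \<in> G}" unfolding conj_class_def by blast
  from ne obtain \<sigma>0 where s0: "\<sigma>0 \<in> frob_class \<xi> p" by blast
  hence "\<sigma>0 \<in> K" using sub by blast
  then obtain h0 where h0: "h0 \<in> G" and s0d: "\<sigma>0 = h0 \<circ> g \<circ> inv h0" unfolding Kd by blast
  interpret h0: aut \<xi> h0 by (rule aut.intro, fact)
  show "K \<subseteq> frob_class \<xi> p"
  proof
    fix \<kappa> assume "\<kappa> \<in> K"
    then obtain h where h: "h \<in> G" and kd: "\<kappa> = h \<circ> g \<circ> inv h" unfolding Kd by blast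
    define \<tau> where "\<tau> = h \<circ> inv h0"
    have t: "\<tau> \<in> G" unfolding \<tau>_def using aut_comp[OF h h0.inv_aut] .
    have "\<tau> \<circ> \<sigma>0 \<circ> inv \<tau> = \<kappa>"
    proof
      fix x
      show "(\<tau> \<circ> \<sigma>0 \<circ> inv \<tau>) x = \<kappa> x"
        unfolding kd s0d \<tau>_def using inv_comp_apply[OF h h0, of x] by (simp add: h0.inv_apply)
    qed
    thus "\<kappa> \<in> frob_class \<xi> p" using frob_conj[OF s0 t] by simp
  qed
qed

lemma closed_formula:
  fixes a :: "nat \<Rightarrow> rat" and z :: "(complex \<Rightarrow> complex) \<Rightarrow> complex"
  assumes recur: "\<forall>n. a (n + degree F) = - (\<Sum>k<degree F. of_int (coeff F k) * a (n + k))"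
    and zsol: "\<forall>i<degree F. (\<Sum>\<sigma>\<in>Aut_L \<xi>. inv \<sigma> (\<xi> ^ i) * z \<sigma>) = of_rat (a i)"
  shows "of_rat (a n) = (\<Sum>\<tau>\<in>G. z \<tau> * inv \<tau> \<xi> ^ n)"
proof (induction n rule: less_induct)
  case (less n)
  have ip: "inv \<tau> (\<xi> ^ i) = inv \<tau> \<xi> ^ i" if "\<tau> \<in> G" for \<tau> i
    using aut.power[OF aut.intro[OF aut.inv_aut[OF aut.intro[OF that]]] QL_xi] .
  show ?case
  proof (cases "n < d")
    case True
    have "of_rat (a n) = (\<Sum>\<sigma>\<in>G. inv \<sigma> (\<xi> ^ n) * z \<sigma>)" using zsol True by simp
    also have "\<dots> = (\<Sum>\<tau>\<in>G. z \<tau> * inv \<tau> \<xi> ^ n)" by (rule sum.cong) (simp_all add: ip mult.commute)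
    finally show ?thesis .
  next
    case False
    then obtain m where n: "n = m + d" by (metis add.commute le_add_diff_inverse not_less)
    have IH: "of_rat (a (m + k)) = (\<Sum>\<tau>\<in>G. z \<tau> * inv \<tau> \<xi> ^ (m + k))" if "k < d" for k
      using less that n by simp
    have rt: "inv \<tau> \<xi> ^ d = - (\<Sum>k<d. of_int (coeff F k) * inv \<tau> \<xi> ^ k)" if "\<tau> \<in> G" for \<tau>
      using monic_root_power[OF monic root_conj[OF aut.inv_aut[OF aut.intro[OF that]]]] .
    have "of_rat (a n) = - (\<Sum>k<d. of_int (coeff F k) * of_rat (a (m + k)))"
      unfolding n using recur by (simp add: of_rat_minus of_rat_sum of_rat_mult)
    also have "\<dots> = - (\<Sum>k<d. of_int (coeff F k) * (\<Sum>\<tau>\<in>G. z \<tau> * inv \<tau> \<xi> ^ (m + k)))"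
      using IH by simp
    also have "\<dots> = (\<Sum>\<tau>\<in>G. z \<tau> * inv \<tau> \<xi> ^ m * (- (\<Sum>k<d. of_int (coeff F k) * inv \<tau> \<xi> ^ k)))"
      by (simp add: sum_distrib_left sum_negf power_add algebra_simps sum.swap[of _ "{..<d}"])
    also have "\<dots> = (\<Sum>\<tau>\<in>G. z \<tau> * inv \<tau> \<xi> ^ n)"
      by (rule sum.cong) (simp_all add: rt[symmetric] n power_add)
    finally show ?thesis .
  qed
qed

lemma a_denominator:
  fixes a :: "nat \<Rightarrow> rat"
  assumes recur: "\<forall>n. a (n + degree F) = - (\<Sum>k<degree F. of_int (coeff F k) * a (n + k))"
  shows "\<exists>N::int. N > 0 \<and> (\<forall>n. of_int N * a n \<in> \<int>)"
proof -
  define N where "N = (\<Prod>i<d. snd (quotient_of (a i)))"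
  have Npos: "N > 0" unfolding N_def by (intro prod_pos) (auto intro: quotient_of_denom_pos')
  have "of_int N * a n \<in> \<int>" for n
  proof (induction n rule: less_induct)
    case (less n)
    show ?case
    proof (cases "n < d")
      case True
      obtain x y where xy: "quotient_of (a n) = (x, y)" by (cases "quotient_of (a n)")
      have "y dvd N" unfolding N_def using dvd_prodI[of "{..<d}" n "\<lambda>i. snd (quotient_of (a i))"] True xy by simp
      then obtain e where e: "N = y * e" by blast
      have "y > 0" using quotient_of_denom_pos[OF xy] .
      hence "of_int N * a n = of_int (e * x)" using quotient_of_div[OF xy] e by (simp add: field_simps)
      thus ?thesis by simp
    next
      case False
      then obtain m where n: "n = m + d" by (metis add.commute le_add_diff_inverse not_less)
      have "of_int N * a n = - (\<Sum>k<d. of_int (coeff F k) * (of_int N * a (m + k)))"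
        unfolding n using recur by (simp add: sum_distrib_left algebra_simps)
      also have "\<dots> \<in> \<int>"
      proof (intro Ints_minus Ints_sum)
        fix k assume "k \<in> {..<d}"
        hence "of_int N * a (m + k) \<in> \<int>" using less n by simp
        thus "of_int (coeff F k) * (of_int N * a (m + k)) \<in> \<int>" using Ints_mult[OF Ints_of_int] by blast
      qed
      finally show ?thesis .
    qed
  qed
  thus ?thesis using Npos by blast
qed

lemma QL_common_denom:
  assumes "finite S" "S \<subseteq> QL \<xi>"
  shows "\<exists>N::int. N > 0 \<and> (\<forall>x\<in>S. \<exists>u. of_int N * x = poly (of_int_poly u) \<xi>)"
  using assms
proof (induction S rule: finite_induct)
  case empty thus ?case by (intro exI[of _ 1]) simp
next
  case (insert x S)
  then obtain N where N: "N > 0" "\<forall>y\<in>S. \<exists>u. of_int N * y = poly (of_int_poly u) \<xi>" by auto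
  from insert have "x \<in> QL \<xi>" by auto
  then obtain q where q: "x = poly (rp q) \<xi>" by (rule QL_cases)
  obtain M A where MA: "M > 0" "of_int_poly A = Polynomial.smult (of_int M) q" using rat_poly_clear by blast
  have "rp (of_int_poly A) = rp (Polynomial.smult (of_int M) q)" using MA(2) by simp
  hence xA: "of_int M * x = poly (of_int_poly A) \<xi>" unfolding q rp_of_int by (simp add: hom_distribs)
  have "\<forall>y\<in>insert x S. \<exists>u. of_int (N * M) * y = poly (of_int_poly u) \<xi>"
  proof
    fix y assume "y \<in> insert x S"
    then consider "y = x" | "y \<in> S" by blast
    thus "\<exists>u. of_int (N * M) * y = poly (of_int_poly u) \<xi>"
    proof cases
      case 1 thus ?thesis using xA by (intro exI[of _ "Polynomial.smult N A"]) (simp add: hom_distribs)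
    next
      case 2 then obtain u where "of_int N * y = poly (of_int_poly u) \<xi>" using N(2) by blast
      thus ?thesis by (intro exI[of _ "Polynomial.smult M u"]) (simp add: hom_distribs mult.assoc mult.left_commute)
    qed
  qed
  thus ?case using N(1) MA(1) by (intro exI[of _ "N * M"]) simp
qed

end

context gal begin

lemma cong_at:
  fixes a :: "nat \<Rightarrow> rat" and z :: "(complex \<Rightarrow> complex) \<Rightarrow> complex" and K
  assumes closed: "\<And>n. of_rat (a n) = (\<Sum>\<tau>\<in>G. z \<tau> * inv \<tau> \<xi> ^ n)"
    and hyp: "\<forall>\<tau>\<in>Aut_L \<xi>. (\<Sum>\<sigma>\<in>Aut_L \<xi>. z \<sigma> * \<tau> (inv \<sigma> \<xi>)) = (if \<tau> \<in> K then 1 else 0)"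
    and Nz: "N > 0" "\<forall>\<tau>\<in>G. \<exists>u. of_int N * z \<tau> = poly (of_int_poly u) \<xi>"
    and Na: "N2 > 0" "\<forall>n. of_int N2 * a n \<in> \<int>"
    and p: "prime p" and nN: "\<not> int p dvd N" and nN2: "\<not> int p dvd N2"
    and s: "\<sigma> \<in> G" and P: "prime_ideal_OL \<xi> P" and pP: "of_nat p \<in> P"
    and fr: "\<forall>x\<in>OL \<xi>. \<sigma> x - x ^ p \<in> P"
  shows "p_integral p (a p)" "rat_cong_mod p (a p) (if \<sigma> \<in> K then 1 else 0)"
proof -
  have I: "is_ideal_OL \<xi> P" using prime_ideal[OF P] .
  define c :: int where "c = (if \<sigma> \<in> K then 1 else 0)"
  obtain m where m: "of_int N2 * a p = of_int m" using Na(2) by (meson Ints_cases)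
  have ap: "a p = of_int m / of_int N2" using m Na(1) by (simp add: field_simps)
  show "p_integral p (a p)" unfolding ap by (rule rat_frac_helper(1)[OF p]) (use Na nN2 in auto)
  have hs: "(\<Sum>\<tau>\<in>G. z \<tau> * \<sigma> (inv \<tau> \<xi>)) = of_int c" using hyp s unfolding c_def by simp
  have "of_int N * (of_rat (a p) - of_int c) = (\<Sum>\<tau>\<in>G. (of_int N * z \<tau>) * (inv \<tau> \<xi> ^ p - \<sigma> (inv \<tau> \<xi>)))"
    unfolding closed hs[symmetric] by (simp add: sum_distrib_left sum_subtractf algebra_simps)
  also have "\<dots> \<in> P"
  proof (rule ideal_sum[OF I])
    fix \<tau> assume t: "\<tau> \<in> G"
    obtain u where u: "of_int N * z \<tau> = poly (of_int_poly u) \<xi>" using Nz(2) t by blast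
    have rO: "inv \<tau> \<xi> \<in> OL \<xi>" using OL_aut[OF aut.inv_aut[OF aut.intro[OF t]] OL_xi] .
    have "inv \<tau> \<xi> ^ p - \<sigma> (inv \<tau> \<xi>) = - (\<sigma> (inv \<tau> \<xi>) - inv \<tau> \<xi> ^ p)" by simp
    also have "\<dots> \<in> P" using ideal_minus[OF I] fr rO by blast
    finally show "(of_int N * z \<tau>) * (inv \<tau> \<xi> ^ p - \<sigma> (inv \<tau> \<xi>)) \<in> P"
      unfolding u by (rule ideal_mult[OF I OL_poly_int[OF OL_xi]])
  qed
  finally have e1: "of_int N * (of_rat (a p) - of_int c) \<in> P" .
  have eqA: "of_int N2 * (of_int N * (of_rat (a p) - of_int c)) = (of_int (N * (m - N2 * c)) :: complex)"
  proof -
    have "of_int N2 * (of_int N * (of_rat (a p) - of_int c)) = (of_int N :: complex) * (of_rat (of_int N2 * a p) - of_int N2 * of_int c)"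
      by (simp add: of_rat_mult algebra_simps)
    also have "\<dots> = of_int (N * (m - N2 * c))" unfolding m by simp
    finally show ?thesis .
  qed
  have memA: "of_int N2 * (of_int N * (of_rat (a p) - of_int c)) \<in> P"
    by (rule ideal_mult[OF I OL_of_int e1])
  have "(of_int (N * (m - N2 * c)) :: complex) \<in> P" using memA unfolding eqA .
  hence "int p dvd N * (m - N2 * c)" using prime_ideal_int[OF P p pP] by blast
  moreover have "prime (int p)" using p by simp
  ultimately have dv: "int p dvd m - N2 * c" using nN prime_dvd_mult_iff by blast
  have "a p - of_int c = of_int (m - N2 * c) / of_int N2" unfolding ap using Na(1) by (simp add: field_simps)
  hence "rat_cong_mod p (a p) (of_int c)"
    unfolding rat_cong_mod_def using rat_frac_helper[OF p _ nN2, of "m - N2 * c"] Na(1) dv by simp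
  thus "rat_cong_mod p (a p) (if \<sigma> \<in> K then 1 else 0)" unfolding c_def by (simp split: if_splits)
qed

end

theorem mainTheorem6:
  fixes F :: "int poly" and \<xi> :: complex and a :: "nat \<Rightarrow> rat"
    and K :: "(complex \<Rightarrow> complex) set" and z :: "(complex \<Rightarrow> complex) \<Rightarrow> complex"
  assumes monic: "lead_coeff F = 1"
    and irred: "irreducible F"
    and root: "poly (map_poly of_int F) \<xi> = 0"
    and galois: "card (Aut_L \<xi>) = degree F"
    and recur: "\<forall>n. a (n + degree F) = - (\<Sum>k<degree F. of_int (coeff F k) * a (n + k))"
    and K: "conj_class (Aut_L \<xi>) K"
    and zL: "\<forall>\<sigma>\<in>Aut_L \<xi>. z \<sigma> \<in> QL \<xi>"
    and zsol: "\<forall>i<degree F. (\<Sum>\<sigma>\<in>Aut_L \<xi>. inv \<sigma> (\<xi> ^ i) * z \<sigma>) = of_rat (a i)"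
    and hyp: "\<forall>\<tau>\<in>Aut_L \<xi>. (\<Sum>\<sigma>\<in>Aut_L \<xi>. z \<sigma> * \<tau> (inv \<sigma> \<xi>)) = (if \<tau> \<in> K then 1 else 0)"
  shows "\<exists>S. finite S \<and> (\<forall>p. prime p \<and> p \<notin> S \<longrightarrow>
           unramified \<xi> p \<and> p_integral p (a p) \<and>
           rat_cong_mod p (a p) (if frob_class \<xi> p = K then 1 else 0))"
proof -
  interpret gal F \<xi> by (unfold_locales) (use monic root galois in auto)
  have closed: "\<And>n. of_rat (a n) = (\<Sum>\<tau>\<in>G. z \<tau> * inv \<tau> \<xi> ^ n)"
    using closed_formula[OF recur zsol] .
  obtain N where Nz: "N > 0" "\<forall>x\<in>z ` G. \<exists>u. of_int N * x = poly (of_int_poly u) \<xi>"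
    using QL_common_denom[of "z ` G"] finite_G zL by blast
  have Nz': "\<forall>\<tau>\<in>G. \<exists>u. of_int N * z \<tau> = poly (of_int_poly u) \<xi>" using Nz(2) by blast
  obtain N2 where Na: "N2 > 0" "\<forall>n. of_int N2 * a n \<in> \<int>" using a_denominator[OF recur] by blast
  define M where "M = Dq * Eint * N * N2"
  have M0: "M \<noteq> 0" unfolding M_def using Dq_pos Eint(1) Nz(1) Na(1) by simp
  define S where "S = {p. prime p \<and> int p dvd M}"
  have "S \<subseteq> {..nat \<bar>M\<bar>}"
  proof
    fix p assume "p \<in> S"
    hence "int p dvd M" unfolding S_def by blast
    hence "\<bar>int p\<bar> \<le> \<bar>M\<bar>" using dvd_imp_le_int[OF M0] by blast
    hence "int p \<le> \<bar>M\<bar>" by simp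
    thus "p \<in> {..nat \<bar>M\<bar>}" by simp
  qed
  hence fS: "finite S" using finite_subset by blast
  have "prime p \<and> p \<notin> S \<longrightarrow> unramified \<xi> p \<and> p_integral p (a p) \<and>
           rat_cong_mod p (a p) (if frob_class \<xi> p = K then 1 else 0)" for p
  proof
    assume pS: "prime p \<and> p \<notin> S"
    hence p: "prime p" and nM: "\<not> int p dvd M" unfolding S_def by auto
    have nD: "\<not> int p dvd Dq" using nM unfolding M_def by (meson dvd_mult2)
    have nE: "\<not> int p dvd Eint" using nM unfolding M_def by (meson dvd_mult2 dvd_mult)
    have nN: "\<not> int p dvd N" using nM unfolding M_def by (meson dvd_mult2 dvd_mult)
    have nN2: "\<not> int p dvd N2" using nM unfolding M_def by (meson dvd_mult)
    have unr: "unramified \<xi> p" unfolding unramified_def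
    proof (intro allI impI)
      fix P assume PP: "prime_ideal_OL \<xi> P \<and> of_nat p \<in> P"
      interpret gal_P F \<xi> P p by (unfold_locales) (use PP p in auto)
      show "of_nat p \<notin> ideal_prod_OL P P" using unramified_at[OF nD nE] .
    qed
    obtain P where P: "prime_ideal_OL \<xi> P" "of_nat p \<in> P" using prime_exists[OF p] by blast
    obtain \<sigma> where s: "\<sigma> \<in> G" and fr: "\<forall>x\<in>OL \<xi>. \<sigma> x - x ^ p \<in> P"
      using frob_exists[OF p nD P] by blast
    have sF: "\<sigma> \<in> frob_class \<xi> p" unfolding frob_class_def using s P fr by blast
    note cg = cong_at[OF closed hyp Nz(1) Nz' Na p nN nN2]
    have pint: "p_integral p (a p)" using cg(1)[OF s P fr] .
    have "rat_cong_mod p (a p) (if frob_class \<xi> p = K then 1 else 0)"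
    proof (cases "frob_class \<xi> p = K")
      case True
      hence "\<sigma> \<in> K" using sF by simp
      thus ?thesis using cg(2)[OF s P fr] True by simp
    next
      case False
      have "\<not> frob_class \<xi> p \<subseteq> K" using frob_vs_class[OF K _ ] sF False by blast
      then obtain \<sigma>' where s': "\<sigma>' \<in> frob_class \<xi> p" "\<sigma>' \<notin> K" by blast
      then obtain P' where "\<sigma>' \<in> G" "prime_ideal_OL \<xi> P'" "of_nat p \<in> P'" "\<forall>x\<in>OL \<xi>. \<sigma>' x - x ^ p \<in> P'"
        unfolding frob_class_def by blast
      hence "rat_cong_mod p (a p) (if \<sigma>' \<in> K then 1 else 0)" using cg(2) by blast
      thus ?thesis using s'(2) False by simp
    qed
    thus "unramified \<xi> p \<and> p_integral p (a p) \<and> rat_cong_mod p (a p) (if frob_class \<xi> p = K then 1 else 0)"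
      using unr pint by blast
  qed
  thus ?thesis using fS by blast
qed

end
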